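(* Let $n\ge5$ and let $w$ be a $cd$-monomial of degree $n-2$ with $m$ occurrences of the variable $d$. Then there are at least $2^m$ André permutations $\pi$ of $[n]$ with $W(\pi)=wd$ and $\pi(n)=n-1$. Consequently, $[wd]\check\Phi^n_1\ge2^m$.
   Context: A permutation of a totally ordered finite set $X$ is a bijection $\pi:[|X|]\to X$; $i$ is a descent if $\pi(i)>\pi(i+1)$; a double descent is a pair of consecutive descents $i,i+1$. $\pi$ (with $|X|=n$) is an André permutation if (1) it has no double descent and (2) for all $2\le j<j'\le n-1$ with $\pi(j-1)=\max\{\pi(j-1),\pi(j),\pi(j'-1),\pi(j')\}$ and $\pi(j')=\min\{\pi(j-1),\pi(j),\pi(j'-1),\pi(j')\}$ there is $j<j''<j'$ with $\pi(j'')<\pi(j')$. The $cd$-type $W(\pi)$ (degree $n$, $\deg c=1,\deg d=2$): $1$ for the empty permutation, $c$ if $n=1$, and for $n\ge2$, $W(\pi)=W(\pi|_{[n-2]})d$ if $n-1$ is a descent, $W(\pi)=W(\pi|_{[n-1]})c$ otherwise. $[w]p$ is the coefficient of $w$ in $p$. The polynomials $\check\Phi^n_i$: let $\Lambda^n$ be the boundary of an $n$-simplex with facets $\sigma_0,\dots,\sigma_n$; $\Gamma^n_i$ the complex generated by $\sigma_0,\dots,\sigma_i$; $\Lambda^n_i$ the CW complex obtained by attaching a new $(n-1)$-cell $\tau$ to $\Gamma^n_i$ with $\partial\tau=\partial\Gamma^n_i$. $\Phi_\Lambda$ is the $cd$-index of the face poset $Q$ of $\Lambda$ with $\hat0,\hat1$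 adjoined: $\Phi_Q(a+b,ab+ba)=\sum_{S\subseteq[n]}h_S(Q)u_S$, $h_S(Q)=\sum_{T\subseteq S}(-1)^{|S\setminus T|}f_T(Q)$, $f_T(Q)$ the number of chains of $Q\setminus\{\hat0,\hat1\}$ with rank set $T$, $u_S=u_1\cdots u_n$ with $u_i=b$ if $i\in S$ and $a$ otherwise. $\check\Phi^n_0=\Phi_{\Lambda^n_0}$, $\check\Phi^n_i=\Phi_{\Lambda^n_i}-\Phi_{\Lambda^n_{i-1}}$ ($1\le i\le n-1$). *)

theory Defs
  imports Main
begin

text \<open>A permutation pi of a totally ordered finite set X (here a finite set of naturals)
  is represented by the list [pi(1), ..., pi(|X|)] of distinct elements; positions are
  1-indexed via perm_at.\<close>

definition perm_at :: "nat list \<Rightarrow> nat \<Rightarrow> nat" where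
  "perm_at xs i = xs ! (i - 1)"

definition is_descent :: "nat list \<Rightarrow> nat \<Rightarrow> bool" where
  "is_descent xs i \<longleftrightarrow> 1 \<le> i \<and> i + 1 \<le> length xs \<and> perm_at xs i > perm_at xs (i + 1)"

definition is_andre :: "nat list \<Rightarrow> bool" where
  "is_andre xs \<longleftrightarrow>
     distinct xs \<and>
     (\<nexists>i. is_descent xs i \<and> is_descent xs (i + 1)) \<and>
     (\<forall>j j'. 2 \<le> j \<and> j < j' \<and> j' \<le> length xs - 1 \<longrightarrow>
        (let p = perm_at xs; M = {p (j - 1), p j, p (j' - 1), p j'} in
          p (j - 1) = Max M \<and> p j' = Min M \<longrightarrow>
          (\<exists>j''. j < j'' \<and> j'' < j' \<and> p j'' < p j')))"

datatype cd = C | D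

fun cd_deg :: "cd list \<Rightarrow> nat" where
  "cd_deg [] = 0"
| "cd_deg (C # w) = Suc (cd_deg w)"
| "cd_deg (D # w) = Suc (Suc (cd_deg w))"

fun cd_type_rev :: "nat list \<Rightarrow> cd list" where
  "cd_type_rev [] = []"
| "cd_type_rev [x] = [C]"
| "cd_type_rev (x # y # zs) =
     (if y > x then cd_type_rev zs @ [D] else cd_type_rev (y # zs) @ [C])"

definition cd_type :: "nat list \<Rightarrow> cd list" where
  "cd_type xs = cd_type_rev (rev xs)"

text \<open>A graded poset Q with \<hat>0, \<hat>1 adjoined is given by its proper part E,
  a strict order lt and a rank function rk (with rank \<hat>0 = 0).\<close>

definition is_chain :: "('a \<Rightarrow> 'a \<Rightarrow> bool) \<Rightarrow> 'a set \<Rightarrow> bool" where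
  "is_chain lt c \<longleftrightarrow> (\<forall>x\<in>c. \<forall>y\<in>c. x \<noteq> y \<longrightarrow> lt x y \<or> lt y x)"

definition flag_f :: "'a set \<Rightarrow> ('a \<Rightarrow> 'a \<Rightarrow> bool) \<Rightarrow> ('a \<Rightarrow> nat) \<Rightarrow> nat set \<Rightarrow> int" where
  "flag_f E lt rk T = int (card {c. c \<subseteq> E \<and> is_chain lt c \<and> rk ` c = T})"

definition flag_h :: "'a set \<Rightarrow> ('a \<Rightarrow> 'a \<Rightarrow> bool) \<Rightarrow> ('a \<Rightarrow> nat) \<Rightarrow> nat set \<Rightarrow> int" where
  "flag_h E lt rk S = (\<Sum>T\<in>Pow S. (-1) ^ card (S - T) * flag_f E lt rk T)"

text \<open>ab-words are bool lists (True = b, False = a); u_S has b exactly at positions in S.\<close>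
definition b_positions :: "bool list \<Rightarrow> nat set" where
  "b_positions u = {i. 1 \<le> i \<and> i \<le> length u \<and> u ! (i - 1)}"

text \<open>Coefficient of the ab-word u in the cd-monomial w evaluated at c = a+b, d = ab+ba.\<close>
fun cd_expand :: "cd list \<Rightarrow> bool list \<Rightarrow> int" where
  "cd_expand [] [] = 1"
| "cd_expand (C # w) (x # u) = cd_expand w u"
| "cd_expand (D # w) (x # y # u) = (if x \<noteq> y then cd_expand w u else 0)"
| "cd_expand _ _ = 0"

text \<open>Phi is the cd-index of the rank-(n+1) poset: Phi(a+b,ab+ba) = sum_S h_S u_S.\<close>
definition is_cd_index ::
  "'a set \<Rightarrow> ('a \<Rightarrow> 'a \<Rightarrow> bool) \<Rightarrow> ('a \<Rightarrow> nat) \<Rightarrow> nat \<Rightarrow> (cd list \<Rightarrow> int) \<Rightarrow> bool" where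
  "is_cd_index E lt rk n Phi \<longleftrightarrow>
     (\<forall>w. cd_deg w \<noteq> n \<longrightarrow> Phi w = 0) \<and>
     (\<forall>u. length u = n \<longrightarrow>
        (\<Sum>w\<in>{w. cd_deg w = n}. Phi w * cd_expand w u) = flag_h E lt rk (b_positions u))"

definition cd_index ::
  "'a set \<Rightarrow> ('a \<Rightarrow> 'a \<Rightarrow> bool) \<Rightarrow> ('a \<Rightarrow> nat) \<Rightarrow> nat \<Rightarrow> cd list \<Rightarrow> int" where
  "cd_index E lt rk n = (THE Phi. is_cd_index E lt rk n Phi)"

text \<open>Vertices of the n-simplex: {0..n}; facet sigma_j = {0..n} - {j}.
  Cells of Lambda^n_i: Some F for a nonempty face F of Gamma^n_i (rank = card F),
  and None for the new (n-1)-cell tau (rank n).  A face F lies in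
  the boundary of Gamma^n_i iff it misses some j <= i and some k with i < k <= n.\<close>

definition Lam_elems :: "nat \<Rightarrow> nat \<Rightarrow> nat set option set" where
  "Lam_elems n i = Some ` {F. F \<noteq> {} \<and> (\<exists>j\<le>i. F \<subseteq> {0..n} - {j})} \<union> {None}"

definition Lam_less :: "nat \<Rightarrow> nat \<Rightarrow> nat set option \<Rightarrow> nat set option \<Rightarrow> bool" where
  "Lam_less n i x y = (case (x, y) of
       (Some F, Some G) \<Rightarrow> F \<subset> G
     | (Some F, None) \<Rightarrow> (\<exists>j k. j \<le> i \<and> i < k \<and> k \<le> n \<and> j \<notin> F \<and> k \<notin> F)
     | _ \<Rightarrow> False)"

definition Lam_rank :: "nat \<Rightarrow> nat set option \<Rightarrow> nat" where
  "Lam_rank n x = (case x of Some F \<Rightarrow> card F | None \<Rightarrow> n)"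

definition Phi_Lam :: "nat \<Rightarrow> nat \<Rightarrow> cd list \<Rightarrow> int" where
  "Phi_Lam n i = cd_index (Lam_elems n i) (Lam_less n i) (Lam_rank n) n"

definition Phi_check :: "nat \<Rightarrow> nat \<Rightarrow> cd list \<Rightarrow> int" where
  "Phi_check n i w = (if i = 0 then Phi_Lam n 0 w else Phi_Lam n i w - Phi_Lam n (i - 1) w)"

end

theory Submission
  imports Defs
begin

definition andre0 :: "nat list \<Rightarrow> bool" where
  "andre0 xs \<longleftrightarrow> distinct xs \<and>
     (\<forall>k. k + 2 < length xs \<longrightarrow> \<not> (xs ! (k + 1) < xs ! k \<and> xs ! (k + 2) < xs ! (k + 1))) \<and>
     (\<forall>p q. p < q \<longrightarrow> q + 3 \<le> length xs \<longrightarrow> xs ! (p + 1) \<le> xs ! p \<longrightarrow> xs ! q \<le> xs ! p \<longrightarrow>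
        xs ! (q + 1) \<le> xs ! p \<longrightarrow> xs ! (q + 1) \<le> xs ! (p + 1) \<longrightarrow> xs ! (q + 1) \<le> xs ! q \<longrightarrow>
        (\<exists>r. p + 2 \<le> r \<and> r \<le> q \<and> xs ! r < xs ! (q + 1)))"

lemma max4: "((a::nat) = Max {a, b, c, d}) = (b \<le> a \<and> c \<le> a \<and> d \<le> a)"
  by (auto simp: max_def)

lemma min4: "((d::nat) = Min {a, b, c, d}) = (d \<le> a \<and> d \<le> b \<and> d \<le> c)"
  by (auto simp: min_def)

lemma is_andre_iff: "is_andre xs = andre0 xs"
proof -
  have A: "(\<nexists>i. is_descent xs i \<and> is_descent xs (i + 1)) =
    (\<forall>k. k + 2 < length xs \<longrightarrow> \<not> (xs ! (k + 1) < xs ! k \<and> xs ! (k + 2) < xs ! (k + 1)))"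
  proof
    assume h: "\<nexists>i. is_descent xs i \<and> is_descent xs (i + 1)"
    show "\<forall>k. k + 2 < length xs \<longrightarrow> \<not> (xs ! (k + 1) < xs ! k \<and> xs ! (k + 2) < xs ! (k + 1))"
    proof (intro allI impI notI)
      fix k assume k: "k + 2 < length xs" "xs ! (k + 1) < xs ! k \<and> xs ! (k + 2) < xs ! (k + 1)"
      have "is_descent xs (Suc k) \<and> is_descent xs (Suc k + 1)"
        using k by (simp add: is_descent_def perm_at_def)
      then show False using h by blast
    qed
  next
    assume h: "\<forall>k. k + 2 < length xs \<longrightarrow> \<not> (xs ! (k + 1) < xs ! k \<and> xs ! (k + 2) < xs ! (k + 1))"
    show "\<nexists>i. is_descent xs i \<and> is_descent xs (i + 1)"
    proof
      assume "\<exists>i. is_descent xs i \<and> is_descent xs (i + 1)"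
      then obtain i where i: "is_descent xs i" "is_descent xs (i + 1)" by blast
      then obtain k where k: "i = Suc k" by (cases i) (auto simp: is_descent_def)
      show False using h[rule_format, of k] i k by (simp add: is_descent_def perm_at_def)
    qed
  qed
  have B: "(\<forall>j j'. 2 \<le> j \<and> j < j' \<and> j' \<le> length xs - 1 \<longrightarrow>
        (let p = perm_at xs; M = {p (j - 1), p j, p (j' - 1), p j'} in
          p (j - 1) = Max M \<and> p j' = Min M \<longrightarrow>
          (\<exists>j''. j < j'' \<and> j'' < j' \<and> p j'' < p j'))) =
     (\<forall>p q. p < q \<longrightarrow> q + 3 \<le> length xs \<longrightarrow> xs ! (p + 1) \<le> xs ! p \<longrightarrow> xs ! q \<le> xs ! p \<longrightarrow>
        xs ! (q + 1) \<le> xs ! p \<longrightarrow> xs ! (q + 1) \<le> xs ! (p + 1) \<longrightarrow> xs ! (q + 1) \<le> xs ! q \<longrightarrow>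
        (\<exists>r. p + 2 \<le> r \<and> r \<le> q \<and> xs ! r < xs ! (q + 1)))" (is "?L = ?R")
  proof
    assume h: ?L
    show ?R
    proof (intro allI impI)
      fix p q assume a: "p < q" "q + 3 \<le> length xs" "xs ! (p + 1) \<le> xs ! p" "xs ! q \<le> xs ! p"
        "xs ! (q + 1) \<le> xs ! p" "xs ! (q + 1) \<le> xs ! (p + 1)" "xs ! (q + 1) \<le> xs ! q"
      have pa: "perm_at xs (p + 2 - 1) = xs ! p" "perm_at xs (p + 2) = xs ! (p + 1)"
        "perm_at xs (q + 2 - 1) = xs ! q" "perm_at xs (q + 2) = xs ! (q + 1)"
        by (simp_all add: perm_at_def)
      have "2 \<le> p + 2 \<and> p + 2 < q + 2 \<and> q + 2 \<le> length xs - 1" using a by simp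
      then have "perm_at xs (p + 2 - 1) = Max {perm_at xs (p + 2 - 1), perm_at xs (p + 2), perm_at xs (q + 2 - 1), perm_at xs (q + 2)} \<and>
          perm_at xs (q + 2) = Min {perm_at xs (p + 2 - 1), perm_at xs (p + 2), perm_at xs (q + 2 - 1), perm_at xs (q + 2)} \<longrightarrow>
          (\<exists>j''. p + 2 < j'' \<and> j'' < q + 2 \<and> perm_at xs j'' < perm_at xs (q + 2))"
        using h by (simp add: Let_def)
      moreover have "perm_at xs (p + 2 - 1) = Max {perm_at xs (p + 2 - 1), perm_at xs (p + 2), perm_at xs (q + 2 - 1), perm_at xs (q + 2)}"
        unfolding max4 pa using a by simp
      moreover have "perm_at xs (q + 2) = Min {perm_at xs (p + 2 - 1), perm_at xs (p + 2), perm_at xs (q + 2 - 1), perm_at xs (q + 2)}"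
        unfolding min4 pa using a by simp
      ultimately obtain j'' where j: "p + 2 < j''" "j'' < q + 2" "perm_at xs j'' < perm_at xs (q + 2)" by blast
      show "\<exists>r. p + 2 \<le> r \<and> r \<le> q \<and> xs ! r < xs ! (q + 1)"
        using j by (intro exI[of _ "j'' - 1"]) (auto simp: perm_at_def)
    qed
  next
    assume h: ?R
    show ?L
    proof (intro allI impI)
      fix j j' assume a: "2 \<le> j \<and> j < j' \<and> j' \<le> length xs - 1"
      define p where "p = j - 2"
      define q where "q = j' - 2"
      have pq: "j = p + 2" "j' = q + 2" using a unfolding p_def q_def by linarith+
      have pa: "perm_at xs (j - 1) = xs ! p" "perm_at xs j = xs ! (p + 1)"
        "perm_at xs (j' - 1) = xs ! q" "perm_at xs j' = xs ! (q + 1)"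
        using pq by (simp_all add: perm_at_def)
      show "let p = perm_at xs; M = {p (j - 1), p j, p (j' - 1), p j'} in
          p (j - 1) = Max M \<and> p j' = Min M \<longrightarrow> (\<exists>j''. j < j'' \<and> j'' < j' \<and> p j'' < p j')"
        unfolding Let_def max4 min4 pa
      proof
        assume c: "(xs ! (p + 1) \<le> xs ! p \<and> xs ! q \<le> xs ! p \<and> xs ! (q + 1) \<le> xs ! p) \<and>
          (xs ! (q + 1) \<le> xs ! p \<and> xs ! (q + 1) \<le> xs ! (p + 1) \<and> xs ! (q + 1) \<le> xs ! q)"
        have "p < q" "q + 3 \<le> length xs" using a pq by auto
        then obtain r where r: "p + 2 \<le> r" "r \<le> q" "xs ! r < xs ! (q + 1)" using h c by blast
        show "\<exists>j''. j < j'' \<and> j'' < j' \<and> perm_at xs j'' < xs ! (q + 1)"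
          using r pq by (intro exI[of _ "r + 1"]) (auto simp: perm_at_def)
      qed
    qed
  qed
  show ?thesis unfolding is_andre_def andre0_def A B ..
qed

lemma andre0_concat:
  assumes a1: "andre0 (xs @ [c])" and c: "\<forall>x\<in>set xs. x < c" and a2: "andre0 ys"
    and lt: "\<forall>x\<in>set xs. \<forall>y\<in>set ys. x < y"
  shows "andre0 (xs @ ys)"
proof -
  let ?L = "length xs"
  let ?z = "xs @ ys"
  have zx: "i < ?L \<Longrightarrow> ?z ! i = xs ! i" for i by (simp add: nth_append)
  have zy: "?L \<le> i \<Longrightarrow> ?z ! i = ys ! (i - ?L)" for i by (simp add: nth_append)
  have cx: "i < ?L \<Longrightarrow> (xs @ [c]) ! i = xs ! i" for i by (simp add: nth_append)
  have xy: "i < ?L \<Longrightarrow> ?L \<le> i' \<Longrightarrow> i' < length ?z \<Longrightarrow> ?z ! i < ?z ! i'" for i i'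
    using lt by (simp add: nth_append)
  have d1: "distinct xs" "distinct ys" using a1 a2 by (auto simp: andre0_def)
  have "distinct ?z" using d1 lt by auto
  moreover have "\<forall>k. k + 2 < length ?z \<longrightarrow> \<not> (?z ! (k + 1) < ?z ! k \<and> ?z ! (k + 2) < ?z ! (k + 1))"
  proof (intro allI impI notI)
    fix k assume k: "k + 2 < length ?z" and dd: "?z ! (k + 1) < ?z ! k \<and> ?z ! (k + 2) < ?z ! (k + 1)"
    show False
    proof (cases "k + 2 < ?L")
      case True
      then have "(xs @ [c]) ! (k + 1) < (xs @ [c]) ! k \<and> (xs @ [c]) ! (k + 2) < (xs @ [c]) ! (k + 1)"
        using dd zx cx by simp
      moreover have "k + 2 < length (xs @ [c])" using True by simp
      ultimately show False using a1 unfolding andre0_def by blast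
    next
      case False
      show False
      proof (cases "k + 1 < ?L")
        case True
        then have "?z ! (k + 1) < ?z ! (k + 2)" using False k by (intro xy) auto
        then show False using dd by simp
      next
        case False2: False
        show False
        proof (cases "k < ?L")
          case True
          then have "?z ! k < ?z ! (k + 1)" using False2 k by (intro xy) auto
          then show False using dd by simp
        next
          case False3: False
          then have "ys ! (k - ?L + 1) < ys ! (k - ?L) \<and> ys ! (k - ?L + 2) < ys ! (k - ?L + 1)"
            using dd zy by (simp add: Suc_diff_le)
          moreover have "k - ?L + 2 < length ys" using k False3 by simp
          ultimately show False using a2 unfolding andre0_def by blast
        qed
      qed
    qed
  qed
  moreover have "\<forall>p q. p < q \<longrightarrow> q + 3 \<le> length ?z \<longrightarrow> ?z ! (p + 1) \<le> ?z ! p \<longrightarrow> ?z ! q \<le> ?z ! p \<longrightarrow>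
        ?z ! (q + 1) \<le> ?z ! p \<longrightarrow> ?z ! (q + 1) \<le> ?z ! (p + 1) \<longrightarrow> ?z ! (q + 1) \<le> ?z ! q \<longrightarrow>
        (\<exists>r. p + 2 \<le> r \<and> r \<le> q \<and> ?z ! r < ?z ! (q + 1))"
  proof (intro allI impI)
    fix p q assume pq: "p < q" "q + 3 \<le> length ?z" and c1: "?z ! (p + 1) \<le> ?z ! p" and c2: "?z ! q \<le> ?z ! p"
      and c3: "?z ! (q + 1) \<le> ?z ! p" and c4: "?z ! (q + 1) \<le> ?z ! (p + 1)" and c5: "?z ! (q + 1) \<le> ?z ! q"
    show "\<exists>r. p + 2 \<le> r \<and> r \<le> q \<and> ?z ! r < ?z ! (q + 1)"
    proof (cases "q + 2 \<le> ?L")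
      case True
      let ?x = "xs @ [c]"
      have e: "i \<le> q + 1 \<Longrightarrow> ?z ! i = ?x ! i" for i using True zx cx by simp
      have "q + 3 \<le> length ?x" using True by simp
      moreover have "?x ! (p + 1) \<le> ?x ! p" "?x ! q \<le> ?x ! p" "?x ! (q + 1) \<le> ?x ! p"
        "?x ! (q + 1) \<le> ?x ! (p + 1)" "?x ! (q + 1) \<le> ?x ! q"
        using c1 c2 c3 c4 c5 e pq by simp_all
      ultimately obtain r where r: "p + 2 \<le> r" "r \<le> q" "?x ! r < ?x ! (q + 1)"
        using a1 pq unfolding andre0_def by blast
      then show ?thesis using e by (intro exI[of _ r]) simp
    next
      case False
      show ?thesis
      proof (cases "p < ?L")
        case True
        have "?z ! p < ?z ! (q + 1)" using True False pq by (intro xy) auto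
        then show ?thesis using c3 by simp
      next
        case False2: False
        define p' where "p' = p - ?L"
        define q' where "q' = q - ?L"
        have pp: "p = p' + ?L" "q = q' + ?L" using False2 pq by (auto simp: p'_def q'_def)
        have ev: "?z ! (i + ?L) = ys ! i" for i using zy[of "i + ?L"] by simp
        have "p' < q'" "q' + 3 \<le> length ys" using pq pp by auto
        moreover have "ys ! (p' + 1) \<le> ys ! p'" "ys ! q' \<le> ys ! p'" "ys ! (q' + 1) \<le> ys ! p'"
          "ys ! (q' + 1) \<le> ys ! (p' + 1)" "ys ! (q' + 1) \<le> ys ! q'"
          using c1 c2 c3 c4 c5 ev[of p'] ev[of "p' + 1"] ev[of q'] ev[of "q' + 1"] pp by (simp_all add: add.commute add.left_commute)
        ultimately obtain r where r: "p' + 2 \<le> r" "r \<le> q'" "ys ! r < ys ! (q' + 1)"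
          using a2 unfolding andre0_def by blast
        show ?thesis
          using r ev[of r] ev[of "q' + 1"] pp by (intro exI[of _ "r + ?L"]) (simp add: add.commute add.left_commute)
      qed
    qed
  qed
  ultimately show ?thesis unfolding andre0_def by blast
qed

lemma andre0_shift:
  assumes a: "andre0 xs"
  shows "andre0 (map (\<lambda>x. x + k) xs)"
proof -
  let ?y = "map (\<lambda>x. x + k) xs"
  have h1: "distinct xs" and h2: "\<forall>k. k + 2 < length xs \<longrightarrow> \<not> (xs ! (k + 1) < xs ! k \<and> xs ! (k + 2) < xs ! (k + 1))"
    and h3: "\<forall>p q. p < q \<longrightarrow> q + 3 \<le> length xs \<longrightarrow> xs ! (p + 1) \<le> xs ! p \<longrightarrow> xs ! q \<le> xs ! p \<longrightarrow>
        xs ! (q + 1) \<le> xs ! p \<longrightarrow> xs ! (q + 1) \<le> xs ! (p + 1) \<longrightarrow> xs ! (q + 1) \<le> xs ! q \<longrightarrow>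
        (\<exists>r. p + 2 \<le> r \<and> r \<le> q \<and> xs ! r < xs ! (q + 1))"
    using a unfolding andre0_def by blast+
  have d: "distinct ?y" using h1 by (simp add: distinct_map inj_on_def)
  have n: "\<forall>k'. k' + 2 < length ?y \<longrightarrow> \<not> (?y ! (k' + 1) < ?y ! k' \<and> ?y ! (k' + 2) < ?y ! (k' + 1))"
    using h2 by simp
  have t: "\<forall>p q. p < q \<longrightarrow> q + 3 \<le> length ?y \<longrightarrow> ?y ! (p + 1) \<le> ?y ! p \<longrightarrow> ?y ! q \<le> ?y ! p \<longrightarrow>
        ?y ! (q + 1) \<le> ?y ! p \<longrightarrow> ?y ! (q + 1) \<le> ?y ! (p + 1) \<longrightarrow> ?y ! (q + 1) \<le> ?y ! q \<longrightarrow>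
        (\<exists>r. p + 2 \<le> r \<and> r \<le> q \<and> ?y ! r < ?y ! (q + 1))"
  proof (intro allI impI)
    fix p q assume pq: "p < q" "q + 3 \<le> length ?y" and c: "?y ! (p + 1) \<le> ?y ! p" "?y ! q \<le> ?y ! p"
      "?y ! (q + 1) \<le> ?y ! p" "?y ! (q + 1) \<le> ?y ! (p + 1)" "?y ! (q + 1) \<le> ?y ! q"
    have l: "p < length xs" "p + 1 < length xs" "q < length xs" "q + 1 < length xs" using pq by auto
    have "xs ! (p + 1) \<le> xs ! p" "xs ! q \<le> xs ! p" "xs ! (q + 1) \<le> xs ! p" "xs ! (q + 1) \<le> xs ! (p + 1)"
      "xs ! (q + 1) \<le> xs ! q" using c l by simp_all
    moreover have "p < q" "q + 3 \<le> length xs" using pq by auto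
    ultimately obtain r where r: "p + 2 \<le> r" "r \<le> q" "xs ! r < xs ! (q + 1)" using h3 by blast
    then show "\<exists>r. p + 2 \<le> r \<and> r \<le> q \<and> ?y ! r < ?y ! (q + 1)" using l by (intro exI[of _ r]) simp
  qed
  show ?thesis unfolding andre0_def using d n t by blast
qed

lemma andre0_short: "distinct xs \<Longrightarrow> length xs \<le> 2 \<Longrightarrow> andre0 xs"
  unfolding andre0_def by auto

lemma ctr_app: "r = [] \<or> s = [] \<or> hd s < last r \<Longrightarrow> cd_type_rev (r @ s) = cd_type_rev s @ cd_type_rev r"
proof (induction r rule: cd_type_rev.induct)
  case 1 then show ?case by simp
next
  case (2 x)
  show ?case
  proof (cases s)
    case Nil then show ?thesis by simp
  next
    case (Cons y zs) then show ?thesis using 2 by simp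
  qed
next
  case (3 x y zs)
  show ?case
  proof (cases "y > x")
    case True
    have "zs = [] \<or> s = [] \<or> hd s < last zs" using 3(3) by auto
    then show ?thesis using 3(1) True by simp
  next
    case False
    have "y # zs = [] \<or> s = [] \<or> hd s < last (y # zs)" using 3(3) by auto
    then show ?thesis using 3(2) False by simp
  qed
qed

lemma cd_type_app: "xs = [] \<or> ys = [] \<or> last xs < hd ys \<Longrightarrow> cd_type (xs @ ys) = cd_type xs @ cd_type ys"
  unfolding cd_type_def using ctr_app[of "rev ys" "rev xs"] by (auto simp: hd_rev last_rev)

lemma ctr_shift: "cd_type_rev (map (\<lambda>x. x + k) r) = cd_type_rev r"
  by (induction r rule: cd_type_rev.induct) auto

lemma cd_type_shift: "cd_type (map (\<lambda>x. x + k) xs) = cd_type xs"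
  unfolding cd_type_def by (simp add: rev_map ctr_shift)

lemma cd_deg_app: "cd_deg (w @ v) = cd_deg w + cd_deg v"
  by (induction w rule: cd_deg.induct) auto

lemma ctr_deg: "cd_deg (cd_type_rev r) = length r"
  by (induction r rule: cd_type_rev.induct) (auto simp: cd_deg_app)

definition andre_chk :: "nat list \<Rightarrow> bool" where
  "andre_chk xs \<longleftrightarrow> distinct xs \<and>
     list_all (\<lambda>k. k + 2 < length xs \<longrightarrow> \<not> (xs ! (k + 1) < xs ! k \<and> xs ! (k + 2) < xs ! (k + 1))) [0..<length xs] \<and>
     list_all (\<lambda>p. list_all (\<lambda>q. p < q \<longrightarrow> q + 3 \<le> length xs \<longrightarrow> xs ! (p + 1) \<le> xs ! p \<longrightarrow> xs ! q \<le> xs ! p \<longrightarrow>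
        xs ! (q + 1) \<le> xs ! p \<longrightarrow> xs ! (q + 1) \<le> xs ! (p + 1) \<longrightarrow> xs ! (q + 1) \<le> xs ! q \<longrightarrow>
        list_ex (\<lambda>r. p + 2 \<le> r \<and> r \<le> q \<and> xs ! r < xs ! (q + 1)) [0..<length xs]) [0..<length xs]) [0..<length xs]"

lemma andre_chk: "andre_chk xs \<Longrightarrow> andre0 xs"
  unfolding andre_chk_def andre0_def list_all_iff list_ex_iff
proof (elim conjE, intro conjI allI impI)
  fix k assume h: "\<forall>k\<in>set [0..<length xs]. k + 2 < length xs \<longrightarrow> \<not> (xs ! (k + 1) < xs ! k \<and> xs ! (k + 2) < xs ! (k + 1))"
    and k: "k + 2 < length xs"
  then show "\<not> (xs ! (k + 1) < xs ! k \<and> xs ! (k + 2) < xs ! (k + 1))" by auto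
next
  fix p q
  assume h: "\<forall>p\<in>set [0..<length xs]. \<forall>q\<in>set [0..<length xs]. p < q \<longrightarrow> q + 3 \<le> length xs \<longrightarrow>
      xs ! (p + 1) \<le> xs ! p \<longrightarrow> xs ! q \<le> xs ! p \<longrightarrow> xs ! (q + 1) \<le> xs ! p \<longrightarrow>
      xs ! (q + 1) \<le> xs ! (p + 1) \<longrightarrow> xs ! (q + 1) \<le> xs ! q \<longrightarrow>
      (\<exists>r\<in>set [0..<length xs]. p + 2 \<le> r \<and> r \<le> q \<and> xs ! r < xs ! (q + 1))"
    and pq: "p < q" "q + 3 \<le> length xs" and c: "xs ! (p + 1) \<le> xs ! p" "xs ! q \<le> xs ! p" "xs ! (q + 1) \<le> xs ! p"
      "xs ! (q + 1) \<le> xs ! (p + 1)" "xs ! (q + 1) \<le> xs ! q"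
  have "p \<in> set [0..<length xs]" "q \<in> set [0..<length xs]" using pq by auto
  then have "\<exists>r\<in>set [0..<length xs]. p + 2 \<le> r \<and> r \<le> q \<and> xs ! r < xs ! (q + 1)"
    using h pq c by blast
  then show "\<exists>r. p + 2 \<le> r \<and> r \<le> q \<and> xs ! r < xs ! (q + 1)" by blast
qed

definition Pw :: "cd list \<Rightarrow> nat list set" where
  "Pw w = {xs. distinct xs \<and> set xs = {1..length xs} \<and> andre0 (xs @ [Suc (length xs)]) \<and> cd_type xs = w}"

lemma Pw_len: "xs \<in> Pw w \<Longrightarrow> length xs = cd_deg w"
  using ctr_deg[of "rev xs"] by (auto simp: Pw_def cd_type_def)

lemma finite_Pw: "finite (Pw w)"
proof (rule finite_subset)
  show "Pw w \<subseteq> {xs. set xs \<subseteq> {1..cd_deg w} \<and> length xs = cd_deg w}"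
    using Pw_len by (auto simp: Pw_def)
  show "finite {xs. set xs \<subseteq> {1..cd_deg w} \<and> length xs = cd_deg w}"
    by (rule finite_lists_length_eq) simp
qed

definition ds :: "nat list \<Rightarrow> nat list \<Rightarrow> nat list" where
  "ds xs ys = xs @ map (\<lambda>y. y + length xs) ys"

lemma set_shift: "set ys = {1..M} \<Longrightarrow> set (map (\<lambda>y. y + L) ys) = {Suc L..L + M}"
proof -
  assume "set ys = {1..M}"
  then have "set (map (\<lambda>y. y + L) ys) = (\<lambda>y. y + L) ` {1..M}" by simp
  also have "\<dots> = {Suc L..L + M}"
  proof
    show "(\<lambda>y. y + L) ` {1..M} \<subseteq> {Suc L..L + M}" by auto
    show "{Suc L..L + M} \<subseteq> (\<lambda>y. y + L) ` {1..M}"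
    proof
      fix z assume "z \<in> {Suc L..L + M}"
      then have "z = (z - L) + L" "z - L \<in> {1..M}" by auto
      then show "z \<in> (\<lambda>y. y + L) ` {1..M}" by (metis imageI)
    qed
  qed
  finally show ?thesis .
qed

lemma ds_mem:
  assumes xs: "xs \<in> Pw u" and ys: "ys \<in> Pw v"
  shows "ds xs ys \<in> Pw (u @ v)"
proof -
  let ?L = "length xs" and ?M = "length ys"
  let ?s = "map (\<lambda>y. y + ?L) ys"
  have x1: "distinct xs" "set xs = {1..?L}" "andre0 (xs @ [Suc ?L])" "cd_type xs = u" using xs by (auto simp: Pw_def)
  have y1: "distinct ys" "set ys = {1..?M}" "andre0 (ys @ [Suc ?M])" "cd_type ys = v" using ys by (auto simp: Pw_def)
  have ss: "set ?s = {Suc ?L..?L + ?M}" by (rule set_shift[OF y1(2)])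
  have d: "distinct (ds xs ys)" using x1(1,2) y1(1) ss by (auto simp: ds_def distinct_map inj_on_def)
  have st: "set (ds xs ys) = {1..length (ds xs ys)}" using x1(2) ss by (auto simp: ds_def)
  have a: "andre0 (ds xs ys @ [Suc (length (ds xs ys))])"
  proof -
    have e: "ds xs ys @ [Suc (length (ds xs ys))] = xs @ map (\<lambda>y. y + ?L) (ys @ [Suc ?M])"
      by (simp add: ds_def)
    have sh: "andre0 (map (\<lambda>y. y + ?L) (ys @ [Suc ?M]))" by (rule andre0_shift[OF y1(3)])
    have lt: "\<forall>x\<in>set xs. \<forall>y\<in>set (map (\<lambda>y. y + ?L) (ys @ [Suc ?M])). x < y"
      using x1(2) y1(2) by auto
    show ?thesis unfolding e by (rule andre0_concat[OF x1(3) _ sh lt]) (use x1(2) in auto)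
  qed
  have ct: "cd_type (ds xs ys) = u @ v"
  proof -
    have "xs = [] \<or> ?s = [] \<or> last xs < hd ?s"
    proof (cases "xs = [] \<or> ys = []")
      case False
      then have ne: "?s \<noteq> []" by simp
      have h1: "hd ?s \<in> set ?s" by (rule hd_in_set[OF ne])
      have h2: "last xs \<in> set xs" using False by simp
      have "last xs \<le> ?L" using h2 x1(2) by auto
      moreover have "Suc ?L \<le> hd ?s" using h1 ss by auto
      ultimately show ?thesis by simp
    qed auto
    then show ?thesis using x1(4) y1(4) by (simp add: ds_def cd_type_app cd_type_shift)
  qed
  show ?thesis using d st a ct by (simp add: Pw_def)
qed

lemma card_ds: "card (Pw u) * card (Pw v) \<le> card (Pw (u @ v))"
proof -
  have inj: "inj_on (\<lambda>(xs, ys). ds xs ys) (Pw u \<times> Pw v)"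
  proof (rule inj_onI, clarify)
    fix xs ys xs' ys' assume a: "xs \<in> Pw u" "ys \<in> Pw v" "xs' \<in> Pw u" "ys' \<in> Pw v" "ds xs ys = ds xs' ys'"
    have l: "length xs = length xs'" using a Pw_len by simp
    then have "xs = xs'" using a(5) by (simp add: ds_def)
    moreover have "map (\<lambda>y. y + length xs) ys = map (\<lambda>y. y + length xs) ys'" using a(5) l by (simp add: ds_def)
    then have "ys = ys'" by (simp add: inj_map_eq_map inj_on_def)
    ultimately show "xs = xs' \<and> ys = ys'" by simp
  qed
  have "card (Pw u) * card (Pw v) = card (Pw u \<times> Pw v)" by (simp add: card_cartesian_product)
  also have "\<dots> = card ((\<lambda>(xs, ys). ds xs ys) ` (Pw u \<times> Pw v))" by (rule card_image[OF inj, symmetric])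
  also have "\<dots> \<le> card (Pw (u @ v))"
    by (rule card_mono[OF finite_Pw]) (auto intro: ds_mem)
  finally show ?thesis .
qed

lemma Pw_lb: "E \<subseteq> Pw w \<Longrightarrow> card E \<le> card (Pw w)"
  by (rule card_mono[OF finite_Pw])

lemma piece_Nil: "1 \<le> card (Pw [])"
proof -
  have "[] \<in> Pw []" by (simp add: Pw_def andre0_def cd_type_def)
  then have "Pw [] \<noteq> {}" by blast
  then show ?thesis using finite_Pw[of "[]"] by (simp add: Suc_leI card_gt_0_iff)
qed

lemma piece_C: "1 \<le> card (Pw [C])"
proof -
  have "[1] \<in> Pw [C]" by (simp add: Pw_def cd_type_def andre0_short)
  then have "Pw [C] \<noteq> {}" by blast
  then show ?thesis using finite_Pw[of "[C]"] by (simp add: Suc_leI card_gt_0_iff)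
qed

lemma Pw_memI: "distinct xs \<Longrightarrow> set xs = {1..length xs} \<Longrightarrow> andre_chk (xs @ [Suc (length xs)])
   \<Longrightarrow> cd_type xs = w \<Longrightarrow> xs \<in> Pw w"
  using andre_chk by (simp add: Pw_def)

lemma piece_CD: "2 \<le> card (Pw [C, D])"
proof -
  have "[1,3,2] \<in> Pw [C, D]" by (rule Pw_memI; simp add: andre_chk_def upt_rec cd_type_def; auto)
  moreover have "[2,3,1] \<in> Pw [C, D]" by (rule Pw_memI; simp add: andre_chk_def upt_rec cd_type_def; auto)
  ultimately have "{[1,3,2],[2,3,1]} \<subseteq> Pw [C, D]" by blast
  from Pw_lb[OF this] show ?thesis by simp
qed

lemma piece_DC: "2 \<le> card (Pw [D, C])"
proof -
  have "[2,1,3] \<in> Pw [D, C]" by (rule Pw_memI; simp add: andre_chk_def upt_rec cd_type_def; auto)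
  moreover have "[3,1,2] \<in> Pw [D, C]" by (rule Pw_memI; simp add: andre_chk_def upt_rec cd_type_def; auto)
  ultimately have "{[2,1,3],[3,1,2]} \<subseteq> Pw [D, C]" by blast
  from Pw_lb[OF this] show ?thesis by simp
qed

lemma piece_DD: "4 \<le> card (Pw [D, D])"
proof -
  have "[2,1,4,3] \<in> Pw [D, D]" by (rule Pw_memI; simp add: andre_chk_def upt_rec cd_type_def; auto)
  moreover have "[3,1,4,2] \<in> Pw [D, D]" by (rule Pw_memI; simp add: andre_chk_def upt_rec cd_type_def; auto)
  moreover have "[3,2,4,1] \<in> Pw [D, D]" by (rule Pw_memI; simp add: andre_chk_def upt_rec cd_type_def; auto)
  moreover have "[4,1,3,2] \<in> Pw [D, D]" by (rule Pw_memI; simp add: andre_chk_def upt_rec cd_type_def; auto)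
  ultimately have "{[2,1,4,3],[3,1,4,2],[3,2,4,1],[4,1,3,2]} \<subseteq> Pw [D, D]" by blast
  from Pw_lb[OF this] show ?thesis by simp
qed

lemma piece_DCD: "4 \<le> card (Pw [D, C, D])"
proof -
  have "[2,1,3,5,4] \<in> Pw [D, C, D]" by (rule Pw_memI; simp add: andre_chk_def upt_rec cd_type_def; auto)
  moreover have "[2,1,4,5,3] \<in> Pw [D, C, D]" by (rule Pw_memI; simp add: andre_chk_def upt_rec cd_type_def; auto)
  moreover have "[3,1,2,5,4] \<in> Pw [D, C, D]" by (rule Pw_memI; simp add: andre_chk_def upt_rec cd_type_def; auto)
  moreover have "[3,1,4,5,2] \<in> Pw [D, C, D]" by (rule Pw_memI; simp add: andre_chk_def upt_rec cd_type_def; auto)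
  ultimately have "{[2,1,3,5,4],[2,1,4,5,3],[3,1,2,5,4],[3,1,4,5,2]} \<subseteq> Pw [D, C, D]" by blast
  from Pw_lb[OF this] show ?thesis by simp
qed

lemma piece_DDD: "8 \<le> card (Pw [D, D, D])"
proof -
  have "[2,1,4,3,6,5] \<in> Pw [D, D, D]" by (rule Pw_memI; simp add: andre_chk_def upt_rec cd_type_def; auto)
  moreover have "[2,1,5,3,6,4] \<in> Pw [D, D, D]" by (rule Pw_memI; simp add: andre_chk_def upt_rec cd_type_def; auto)
  moreover have "[2,1,5,4,6,3] \<in> Pw [D, D, D]" by (rule Pw_memI; simp add: andre_chk_def upt_rec cd_type_def; auto)
  moreover have "[2,1,6,3,5,4] \<in> Pw [D, D, D]" by (rule Pw_memI; simp add: andre_chk_def upt_rec cd_type_def; auto)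
  moreover have "[3,1,4,2,6,5] \<in> Pw [D, D, D]" by (rule Pw_memI; simp add: andre_chk_def upt_rec cd_type_def; auto)
  moreover have "[3,1,5,2,6,4] \<in> Pw [D, D, D]" by (rule Pw_memI; simp add: andre_chk_def upt_rec cd_type_def; auto)
  moreover have "[3,1,5,4,6,2] \<in> Pw [D, D, D]" by (rule Pw_memI; simp add: andre_chk_def upt_rec cd_type_def; auto)
  moreover have "[3,1,6,2,5,4] \<in> Pw [D, D, D]" by (rule Pw_memI; simp add: andre_chk_def upt_rec cd_type_def; auto)
  ultimately have "{[2,1,4,3,6,5],[2,1,5,3,6,4],[2,1,5,4,6,3],[2,1,6,3,5,4],
     [3,1,4,2,6,5],[3,1,5,2,6,4],[3,1,5,4,6,2],[3,1,6,2,5,4]} \<subseteq> Pw [D, D, D]" by blast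
  from Pw_lb[OF this] show ?thesis by simp
qed

lemma Pw_bound: "w \<noteq> [D] \<Longrightarrow> 2 ^ count_list w D \<le> card (Pw w)"
proof (induction "length w" arbitrary: w rule: less_induct)
  case less
  show ?case
  proof (cases w)
    case Nil then show ?thesis using piece_Nil by simp
  next
    case (Cons x r)
    show ?thesis
    proof (cases x)
      case C
      show ?thesis
      proof (cases "r = [D]")
        case True then show ?thesis using Cons C piece_CD by simp
      next
        case False
        have "2 ^ count_list r D \<le> card (Pw r)" using less Cons False by simp
        moreover have "card (Pw [C]) * card (Pw r) \<le> card (Pw ([C] @ r))" by (rule card_ds)
        ultimately show ?thesis using Cons C piece_C
          by (metis (no_types, lifting) append_Cons append_Nil count_list.simps(2) cd.distinct(1) le_trans mult_le_mono1 mult_1)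
      qed
    next
      case D
      show ?thesis
      proof (cases r)
        case Nil then show ?thesis using Cons D less by simp
      next
        case (Cons y r')
        note wr = \<open>w = x # r\<close>
        show ?thesis
        proof (cases y)
          case C
          show ?thesis
          proof (cases "r' = [D]")
            case True then show ?thesis using wr Cons D C piece_DCD by simp
          next
            case False
            have "2 ^ count_list r' D \<le> card (Pw r')" using less wr Cons False by simp
            moreover have "card (Pw [D, C]) * card (Pw r') \<le> card (Pw ([D, C] @ r'))" by (rule card_ds)
            ultimately have "2 * 2 ^ count_list r' D \<le> card (Pw ([D, C] @ r'))"
              using piece_DC by (meson le_trans mult_le_mono)
            then show ?thesis using wr Cons D C by simp
          qed
        next
          case D2: D
          show ?thesis
          proof (cases "r' = [D]")
            case True then show ?thesis using wr Cons D D2 piece_DDD by simp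
          next
            case False
            have "2 ^ count_list r' D \<le> card (Pw r')" using less wr Cons False by simp
            moreover have "card (Pw [D, D]) * card (Pw r') \<le> card (Pw ([D, D] @ r'))" by (rule card_ds)
            ultimately have "4 * 2 ^ count_list r' D \<le> card (Pw ([D, D] @ r'))"
              using piece_DD by (meson le_trans mult_le_mono)
            then show ?thesis using wr Cons D D2 by simp
          qed
        qed
      qed
    qed
  qed
qed

section \<open>xy-coefficient operators\<close>

fun zc :: "cd list \<Rightarrow> bool list \<Rightarrow> int" where
  "zc [] t = (if t = [] then 1 else 0)"
| "zc (C # w) (a # t) = (if a then 2 else 1) * zc w t"
| "zc (D # w) (a # b # t) = (of_bool a + of_bool b) * zc w t"
| "zc _ _ = 0"

definition pairD :: "(bool list \<Rightarrow> int) \<Rightarrow> bool \<Rightarrow> bool \<Rightarrow> bool list \<Rightarrow> int" where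
  "pairD P a b t = (if a \<and> \<not> b then P (False # t) else if \<not> a \<and> b then P (True # t) - P (False # t)
      else if a \<and> b then P (True # t) else 0)"

fun Dc :: "(bool list \<Rightarrow> int) \<Rightarrow> bool list \<Rightarrow> int" where
  "Dc P (a # b # t) = pairD P a b t + Dc (\<lambda>s. P (a # s)) (b # t)"
| "Dc P _ = 0"

fun dlt :: "(bool list \<Rightarrow> int) \<Rightarrow> bool list \<Rightarrow> int" where
  "dlt P (a # b # t) = (if b then P (b # t) else 0) + dlt (\<lambda>s. P (a # s)) (b # t)"
| "dlt P _ = 0"

definition Rop :: "(bool list \<Rightarrow> int) \<Rightarrow> bool list \<Rightarrow> int" where
  "Rop P t = (case t of [] \<Rightarrow> 0 | a # r \<Rightarrow> (if a then P r else 0) + P (butlast t) + dlt P t)"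

definition Rc :: "(bool list \<Rightarrow> int) \<Rightarrow> bool list \<Rightarrow> int" where
  "Rc P t = (if t = [] then 0 else (if last t then 2 else 1) * P (butlast t))"

fun La :: "(bool \<Rightarrow> int) \<Rightarrow> (bool list \<Rightarrow> int) \<Rightarrow> bool list \<Rightarrow> int" where
  "La \<alpha> Q (a # s) = \<alpha> a * Q s"
| "La \<alpha> Q [] = 0"

fun L2 :: "(bool \<Rightarrow> bool \<Rightarrow> int) \<Rightarrow> (bool list \<Rightarrow> int) \<Rightarrow> bool list \<Rightarrow> int" where
  "L2 \<beta> Q (a # b # s) = \<beta> a b * Q s"
| "L2 \<beta> Q _ = 0"

definition Dal :: "(bool \<Rightarrow> int) \<Rightarrow> bool \<Rightarrow> bool \<Rightarrow> int" where
  "Dal \<alpha> a b = (if a \<and> \<not> b then \<alpha> False else if \<not> a \<and> b then \<alpha> True - \<alpha> False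
      else if a \<and> b then \<alpha> True else 0)"

lemma Dc_scale: "Dc (\<lambda>s. k * P s) t = k * Dc P t"
  by (induction P t rule: Dc.induct) (auto simp: pairD_def algebra_simps)

lemma Dc_add: "Dc (\<lambda>s. P s + Q s) t = Dc P t + Dc Q t"
proof (induction P t arbitrary: Q rule: Dc.induct)
  case (1 P a b t)
  have "Dc (\<lambda>s. P (a # s) + Q (a # s)) (b # t) = Dc (\<lambda>s. P (a # s)) (b # t) + Dc (\<lambda>s. Q (a # s)) (b # t)"
    using 1[of "\<lambda>s. Q (a # s)"] by simp
  then show ?case by (simp add: pairD_def)
qed auto

lemma Dc_zero: "Dc (\<lambda>s. 0) t = 0"
  using Dc_scale[of 0 "\<lambda>s. 0" t] by simp

lemma Dc_sum_list: "Dc (\<lambda>s. \<Sum>x\<leftarrow>L. f x s) t = (\<Sum>x\<leftarrow>L. Dc (f x) t)"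
proof (induction L)
  case Nil then show ?case using Dc_zero by simp
next
  case (Cons x L)
  have "Dc (\<lambda>s. \<Sum>x\<leftarrow>x # L. f x s) t = Dc (\<lambda>s. f x s + (\<Sum>x\<leftarrow>L. f x s)) t" by simp
  also have "\<dots> = Dc (f x) t + Dc (\<lambda>s. \<Sum>x\<leftarrow>L. f x s) t" by (rule Dc_add)
  finally show ?case using Cons by simp
qed

lemma Dc_La: "Dc (La \<alpha> Q) t = L2 (Dal \<alpha>) Q t + La \<alpha> (Dc Q) t"
proof (cases "\<exists>a b t'. t = a # b # t'")
  case True
  then obtain a b t' where 1: "t = a # b # t'" by blast
  have e: "(\<lambda>s. La \<alpha> Q (a # s)) = (\<lambda>s. \<alpha> a * Q s)" by simp
  show ?thesis using 1 by (simp add: e Dc_scale pairD_def Dal_def left_diff_distrib)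
next
  case False
  then have "t = [] \<or> (\<exists>a. t = [a])" by (cases t; cases "tl t") auto
  then show ?thesis by auto
qed

lemma Dc_Ld: "Dc (L2 (\<lambda>a b. of_bool a + of_bool b) Q) t
   = La (\<lambda>a. if a then 2 else 1) (L2 (\<lambda>a b. of_bool a + of_bool b) Q) t
     + L2 (\<lambda>a b. of_bool a + of_bool b) (Dc Q) t"
proof (cases "\<exists>a b t'. t = a # b # t'")
  case True
  then obtain a b t' where 1: "t = a # b # t'" by blast
  have e: "(\<lambda>s. L2 (\<lambda>a b. of_bool a + of_bool b) Q (a # s)) = La (\<lambda>b. of_bool a + of_bool b) Q"
    by (rule ext, case_tac s) auto
  show ?thesis
  proof (cases t')
    case Nil
    then show ?thesis using 1 by (simp add: e Dc_La pairD_def Dal_def)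
  next
    case (Cons c t'')
    then show ?thesis using 1 by (cases a; cases b; cases c) (simp_all add: e Dc_La pairD_def Dal_def Dc_scale Dc_zero)
  qed
next
  case False
  then have "t = [] \<or> (\<exists>a. t = [a])" by (cases t; cases "tl t") auto
  then show ?thesis by auto
qed

lemma Rop_eq: "Rop P t = Rc P t + Dc P t"
proof (induction t arbitrary: P)
  case Nil then show ?case by (simp add: Rop_def Rc_def)
next
  case (Cons a r)
  show ?case
  proof (cases r)
    case Nil then show ?thesis by (simp add: Rop_def Rc_def)
  next
    case (Cons b t'')
    have IH: "Rop (\<lambda>s. P (a # s)) r = Rc (\<lambda>s. P (a # s)) r + Dc (\<lambda>s. P (a # s)) r" by (rule Cons.IH)
    then show ?thesis using Cons
      by (cases a; cases b) (auto simp: Rop_def Rc_def pairD_def)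
  qed
qed

fun gwords :: "cd list \<Rightarrow> cd list list" where
  "gwords [] = []"
| "gwords (C # w) = (D # w) # map ((#) C) (gwords w)"
| "gwords (D # w) = (C # D # w) # map ((#) D) (gwords w)"

lemma cd_deg_append: "cd_deg (w @ v) = cd_deg w + cd_deg v"
  by (induction w rule: cd_deg.induct) auto

lemma cd_deg_Cons_nz[simp]: "cd_deg (x # w) \<noteq> 0"
  by (cases x) auto

lemma zc_C: "zc (C # w) = La (\<lambda>a. if a then 2 else 1) (zc w)"
proof (rule ext)
  fix t show "zc (C # w) t = La (\<lambda>a. if a then 2 else 1) (zc w) t" by (cases t) auto
qed

lemma zc_D: "zc (D # w) = L2 (\<lambda>a b. of_bool a + of_bool b) (zc w)"
proof (rule ext)
  fix t show "zc (D # w) t = L2 (\<lambda>a b. of_bool a + of_bool b) (zc w) t"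
    apply (cases t) apply simp apply (rename_tac a r) apply (case_tac r) apply auto done
qed

lemma La_sum_list: "(\<Sum>x\<leftarrow>L. La \<alpha> (f x) t) = La \<alpha> (\<lambda>s. \<Sum>x\<leftarrow>L. f x s) t"
  by (cases t) (auto simp: sum_list_const_mult)

lemma L2_sum_list: "(\<Sum>x\<leftarrow>L. L2 \<beta> (f x) t) = L2 \<beta> (\<lambda>s. \<Sum>x\<leftarrow>L. f x s) t"
  apply (cases t) apply simp apply (rename_tac a r) apply (case_tac r) apply (auto simp: sum_list_const_mult) done

lemma gwords_zc: "(\<Sum>v\<leftarrow>gwords w. zc v t) = Dc (zc w) t"
proof (induction w arbitrary: t)
  case Nil
  have z: "(\<lambda>s. zc [] (a # s)) = (\<lambda>s. 0)" for a by (rule ext) simp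
  show ?case
    apply (cases t) apply simp apply (rename_tac a r) apply (case_tac r)
    by (auto simp: pairD_def z Dc_zero)
next
  case (Cons x w)
  have IH: "(\<lambda>s. \<Sum>v\<leftarrow>gwords w. zc v s) = Dc (zc w)" using Cons by (intro ext) simp
  show ?case
  proof (cases x)
    case C
    have dal: "Dal (\<lambda>a. if a then 2 else 1) = (\<lambda>a b. of_bool a + of_bool b)"
      by (intro ext) (auto simp: Dal_def)
    have "(\<Sum>v\<leftarrow>gwords (x # w). zc v t) = zc (D # w) t + (\<Sum>v\<leftarrow>gwords w. zc (C # v) t)"
      using C by (simp add: comp_def)
    also have "\<dots> = L2 (\<lambda>a b. of_bool a + of_bool b) (zc w) t + La (\<lambda>a. if a then 2 else 1) (Dc (zc w)) t"
      by (simp add: zc_C zc_D La_sum_list IH)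
    also have "\<dots> = Dc (zc (x # w)) t" using C by (simp add: zc_C Dc_La dal)
    finally show ?thesis .
  next
    case D
    have "(\<Sum>v\<leftarrow>gwords (x # w). zc v t) = zc (C # D # w) t + (\<Sum>v\<leftarrow>gwords w. zc (D # v) t)"
      using D by (simp add: comp_def)
    also have "\<dots> = La (\<lambda>a. if a then 2 else 1) (L2 (\<lambda>a b. of_bool a + of_bool b) (zc w)) t
        + L2 (\<lambda>a b. of_bool a + of_bool b) (Dc (zc w)) t"
      by (simp add: zc_C zc_D L2_sum_list IH)
    also have "\<dots> = Dc (zc (x # w)) t" using D by (simp add: zc_D Dc_Ld)
    finally show ?thesis .
  qed
qed

lemma zc_len: "zc w t \<noteq> 0 \<Longrightarrow> length t = cd_deg w"
  by (induction w t rule: zc.induct) (auto split: if_splits)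

lemma zc_append: "length s = cd_deg w \<Longrightarrow> zc (w @ v) (s @ r) = zc w s * zc v r"
proof (induction w s rule: zc.induct)
  case (1 t) then show ?case by simp
next
  case (2 w a t) then show ?case by simp
next
  case (3 w a b t) then show ?case by simp
qed auto

lemma zc_snoc_C: "zc (w @ [C]) t = Rc (zc w) t"
proof (cases "t = []")
  case True
  then show ?thesis using zc_len[of "w @ [C]" t]
    by (cases "zc (w @ [C]) t = 0") (auto simp: Rc_def cd_deg_append)
next
  case False
  then obtain s a where t: "t = s @ [a]" by (metis rev_exhaust)
  show ?thesis
  proof (cases "length s = cd_deg w")
    case True
    then show ?thesis using t by (simp add: zc_append Rc_def)
  next
    case False
    have "zc (w @ [C]) t = 0"
    proof (rule ccontr)
      assume "zc (w @ [C]) t \<noteq> 0"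
      from zc_len[OF this] have "length t = cd_deg (w @ [C])" .
      moreover have "cd_deg (w @ [C]) = Suc (cd_deg w)" by (induction w rule: cd_deg.induct) auto
      ultimately show False using False t by simp
    qed
    moreover have "zc w s = 0" using zc_len[of w s] False by auto
    ultimately show ?thesis using t by (simp add: Rc_def)
  qed
qed

lemma cd_deg_gwords: "v \<in> set (gwords w) \<Longrightarrow> cd_deg v = Suc (cd_deg w)"
  by (induction w arbitrary: v rule: gwords.induct) auto

fun Lb :: "nat \<Rightarrow> cd list list" where
  "Lb 0 = [[]]"
| "Lb (Suc k) = map (\<lambda>w. w @ [C]) (Lb k) @ concat (map gwords (Lb k))"

lemma Lb_deg: "w \<in> set (Lb k) \<Longrightarrow> cd_deg w = k"
  by (induction k arbitrary: w) (auto simp: cd_deg_append dest: cd_deg_gwords)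

fun kkr :: "nat \<Rightarrow> bool list \<Rightarrow> nat" where
  "kkr N [] = 1"
| "kkr N (False # r) = kkr N r"
| "kkr N (True # r) = (N choose Suc (length r)) * kkr (Suc (length r)) r"

definition psi :: "nat \<Rightarrow> bool list \<Rightarrow> int" where
  "psi k t = (if length t = k then int (kkr (Suc k) (rev t)) else 0)"

lemma dlt_snoc: "dlt P (s @ [x]) = dlt (\<lambda>r. P (r @ [x])) s + (if s = [] \<or> \<not> x then 0 else P (butlast s @ [True]))"
proof (induction s arbitrary: P)
  case Nil then show ?case by simp
next
  case (Cons a s')
  show ?case
  proof (cases s')
    case Nil then show ?thesis by simp
  next
    case (Cons b s'')
    have IH: "dlt (\<lambda>r. P (a # r)) (s' @ [x]) = dlt (\<lambda>r. P (a # r @ [x])) s'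
       + (if s' = [] \<or> \<not> x then 0 else P (a # butlast s' @ [True]))"
      using Cons.IH[of "\<lambda>r. P (a # r)"] by simp
    show ?thesis using IH Cons by simp
  qed
qed

lemma dlt_rep: "dlt P (s @ True # replicate m False) = dlt (\<lambda>r. P (r @ True # replicate m False)) s
   + (if s = [] then 0 else P (butlast s @ True # replicate m False))"
proof (induction m arbitrary: P)
  case 0 then show ?case using dlt_snoc[of P s True] by simp
next
  case (Suc m)
  have e: "s @ True # replicate (Suc m) False = (s @ True # replicate m False) @ [False]"
    by (simp add: replicate_append_same[symmetric])
  have e2: "\<And>r. (r @ True # replicate m False) @ [False] = r @ True # replicate (Suc m) False"
    by (simp add: replicate_append_same[symmetric])
  show ?case unfolding e dlt_snoc using Suc[of "\<lambda>r. P (r @ [False])"] by (simp add: e2 replicate_append_same)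
qed

lemma dlt_allF: "dlt P (replicate m False) = 0"
proof (induction m arbitrary: P)
  case 0 then show ?case by simp
next
  case (Suc m)
  then show ?case by (cases m) auto
qed

lemma dlt_cong: "(\<And>s. length s + 1 = length t \<Longrightarrow> P s = Q s) \<Longrightarrow> dlt P t = dlt Q t"
proof (induction P t arbitrary: Q rule: dlt.induct)
  case (1 P a b t)
  have "dlt (\<lambda>s. P (a # s)) (b # t) = dlt (\<lambda>s. Q (a # s)) (b # t)"
    by (rule 1(1)) (use 1(2) in auto)
  then show ?case using 1(2)[of "b # t"] by (cases b) auto
qed auto

lemma dlt_scale: "dlt (\<lambda>s. k * P s) t = k * dlt P t"
  by (induction P t rule: dlt.induct) (auto simp: algebra_simps)

lemma dlt_zero: "(\<And>s. length s + 1 = length t \<Longrightarrow> P s = 0) \<Longrightarrow> dlt P t = 0"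
  using dlt_cong[of t P "\<lambda>s. 0 * P s"] dlt_scale[of 0 P t] by simp

lemma kkr_F: "kkr N (replicate m False @ r) = kkr N r"
  by (induction m) auto

lemma psi_F: "psi k (replicate k False) = 1"
  using kkr_F[of "Suc k" k "[]"] by (simp add: psi_def rev_replicate)

lemma psi_T: "length t0 + 1 + m = k \<Longrightarrow>
  psi k (t0 @ True # replicate m False) = int (Suc k choose Suc (length t0)) * psi (length t0) t0"
  by (simp add: psi_def kkr_F[of _ m "True # rev t0", unfolded replicate_append_same] rev_replicate)

lemma decomp: "t = replicate (length t) False \<or> (\<exists>t0 m. t = t0 @ True # replicate m False)"
proof (induction t rule: rev_induct)
  case Nil then show ?case by simp
next
  case (snoc x s)
  show ?case
  proof (cases x)
    case True then show ?thesis by (intro disjI2 exI[of _ s] exI[of _ 0]) simp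
  next
    case False
    from snoc show ?thesis
    proof
      assume "s = replicate (length s) False"
      then have "s @ [x] = replicate (length (s @ [x])) False" using False
        by (metis length_append_singleton replicate_Suc replicate_append_same)
      then show ?thesis by blast
    next
      assume "\<exists>t0 m. s = t0 @ True # replicate m False"
      then obtain t0 m where "s = t0 @ True # replicate m False" by blast
      then have "s @ [x] = t0 @ True # replicate (Suc m) False" using False
        by (simp add: replicate_append_same[symmetric])
      then show ?thesis by blast
    qed
  qed
qed

lemma butlast_rep: "butlast (t0 @ True # replicate m False) = (if m = 0 then t0 else t0 @ True # replicate (m - 1) False)"
proof (cases m)
  case 0 then show ?thesis by (simp add: butlast_append)
next
  case (Suc m')
  then show ?thesis by (simp add: butlast_append replicate_append_same[symmetric])
qed

lemma psi_butlast: "length t0 + 1 + m = Suc k \<Longrightarrow>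
  psi k (butlast (t0 @ True # replicate m False)) = int (Suc k choose Suc (length t0)) * psi (length t0) t0"
proof (cases m)
  case 0
  assume "length t0 + 1 + m = Suc k"
  then show ?thesis using 0 by (simp add: butlast_rep)
next
  case (Suc m')
  assume a: "length t0 + 1 + m = Suc k"
  have b: "butlast (t0 @ True # replicate m False) = t0 @ True # replicate m' False"
    using butlast_rep[of t0 m] Suc by simp
  show ?thesis unfolding b using a Suc psi_T[of t0 m' k] by simp
qed

lemma Rop_Cons: "Rop P (a # r) = (if a then P r else 0) + P (butlast (a # r)) + dlt P (a # r)"
  unfolding Rop_def by (simp only: list.case)

lemma R_psi: "Rop (psi k) t = psi (Suc k) t"
proof (induction k arbitrary: t rule: less_induct)
  case (less k)
  show ?case
  proof (cases "length t = Suc k")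
    case False
    have "dlt (psi k) t = 0" by (rule dlt_zero) (use False in \<open>auto simp: psi_def\<close>)
    moreover have "t \<noteq> [] \<Longrightarrow> psi k (butlast t) = 0" "psi (Suc k) t = 0" using False by (auto simp: psi_def)
    moreover have "t \<noteq> [] \<Longrightarrow> psi k (tl t) = 0" using False by (auto simp: psi_def)
    ultimately show ?thesis by (cases t) (simp_all add: Rop_def)
  next
    case True
    from decomp[of t] show ?thesis
    proof
      assume t: "t = replicate (length t) False"
      have d: "dlt (psi k) t = 0" using t dlt_allF by metis
      have t2: "t = replicate (Suc k) False" using t True by metis
      have t': "t = False # replicate k False" using t2 by simp
      have bl: "butlast t = replicate k False" unfolding t2 by (induction k) auto
      have "Rop (psi k) t = psi k (butlast t) + dlt (psi k) t"
        by (simp add: Rop_def t')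
      then show ?thesis using d bl psi_F[of k] psi_F[of "Suc k"] t2 by simp
    next
      assume "\<exists>t0 m. t = t0 @ True # replicate m False"
      then obtain t0 m where t: "t = t0 @ True # replicate m False" by blast
      define j where "j = length t0"
      have jm: "j + 1 + m = Suc k" using True t j_def by simp
      have bl: "psi k (butlast t) = int (Suc k choose Suc j) * psi j t0"
        using psi_butlast[of t0 m k] jm t j_def by simp
      have goal: "psi (Suc k) t = int (Suc (Suc k) choose Suc j) * psi j t0"
        using psi_T[of t0 m "Suc k"] jm t j_def by simp
      show ?thesis
      proof (cases t0)
        case Nil
        have "dlt (psi k) t = 0" using t Nil dlt_rep[of "psi k" "[]" m] by simp
        moreover have "psi k (replicate m False) = 1" using jm Nil j_def psi_F[of k] by simp
        moreover have "Rop (psi k) t = psi k (replicate m False) + psi k (butlast t) + dlt (psi k) t"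
          using t Nil by (simp add: Rop_def)
        moreover have "psi 0 [] = 1" by (simp add: psi_def)
        ultimately show ?thesis using t Nil bl goal j_def by simp
      next
        case (Cons a t1)
        have j1: "j = Suc (length t1)" using Cons j_def by simp
        have hd: "psi k (t1 @ True # replicate m False) = int (Suc k choose j) * psi (j - 1) t1"
          using psi_T[of t1 m k] jm j1 by simp
        have bt: "psi k (butlast t0 @ True # replicate m False) = int (Suc k choose j) * psi (j - 1) (butlast t0)"
        proof -
          have lj: "length (butlast t0) = j - 1" by (simp add: j_def)
          have lbt: "length (butlast t0) + 1 + m = k" using jm j1 lj by simp
          have sj: "Suc (j - 1) = j" using j1 by simp
          show ?thesis using psi_T[OF lbt] unfolding lj sj .
        qed
        have dl: "dlt (\<lambda>r. psi k (r @ True # replicate m False)) t0 = int (Suc k choose j) * dlt (psi (j - 1)) t0"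
        proof -
          have "dlt (\<lambda>r. psi k (r @ True # replicate m False)) t0 = dlt (\<lambda>r. int (Suc k choose j) * psi (j - 1) r) t0"
          proof (rule dlt_cong)
            fix s :: "bool list" assume "length s + 1 = length t0"
            then have ls: "length s = j - 1" and l2: "length s + 1 + m = k" using jm j_def by auto
            have sj: "Suc (j - 1) = j" using j1 by simp
            show "psi k (s @ True # replicate m False) = int (Suc k choose j) * psi (j - 1) s"
              using psi_T[OF l2] unfolding ls sj .
          qed
          then show ?thesis by (simp add: dlt_scale)
        qed
        have IH: "Rop (psi (j - 1)) t0 = psi j t0" using less[of "j - 1" t0] jm j1 by simp
        have ne: "t0 \<noteq> []" using Cons by simp
        have tt: "t = a # (t1 @ True # replicate m False)" using t Cons by simp
        have dlt_t: "dlt (psi k) t = int (Suc k choose j) * dlt (psi (j - 1)) t0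
            + int (Suc k choose j) * psi (j - 1) (butlast t0)"
          using dlt_rep[of "psi k" t0 m] dl bt ne t by simp
        have r: "Rop (psi k) t = (if a then psi k (t1 @ True # replicate m False) else 0)
            + psi k (butlast t) + dlt (psi k) t"
          by (simp only: tt Rop_Cons)
        have r0: "Rop (psi (j - 1)) t0 = (if a then psi (j - 1) t1 else 0)
            + psi (j - 1) (butlast t0) + dlt (psi (j - 1)) t0"
          by (simp only: Cons Rop_Cons)
        have pas: "int (Suc (Suc k) choose Suc j) = int (Suc k choose j) + int (Suc k choose Suc j)" by simp
        have "Rop (psi k) t = int (Suc k choose j) * Rop (psi (j - 1)) t0 + int (Suc k choose Suc j) * psi j t0"
          unfolding r r0 dlt_t hd bl by (simp add: algebra_simps)
        also have "\<dots> = int (Suc (Suc k) choose Suc j) * psi j t0" unfolding IH pas by (simp add: algebra_simps)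
        finally show ?thesis using goal by simp
      qed
    qed
  qed
qed

lemma sum_list_concat_map: "(\<Sum>x\<leftarrow>concat xss. f x) = (\<Sum>xs\<leftarrow>xss. \<Sum>x\<leftarrow>xs. f x)"
  by (induction xss) auto

definition zsum :: "nat \<Rightarrow> bool list \<Rightarrow> int" where
  "zsum k t = (\<Sum>w\<leftarrow>Lb k. zc w t)"

lemma Rc_sum_list: "Rc (\<lambda>s. \<Sum>x\<leftarrow>L. f x s) t = (\<Sum>x\<leftarrow>L. Rc (f x) t)"
  by (simp add: Rc_def sum_list_const_mult)

lemma zsum_psi: "zsum k = psi k"
proof (induction k)
  case 0
  show ?case by (rule ext) (simp add: zsum_def psi_def)
next
  case (Suc k)
  show ?case
  proof (rule ext)
    fix t
    have "zsum (Suc k) t = (\<Sum>w\<leftarrow>Lb k. zc (w @ [C]) t) + (\<Sum>w\<leftarrow>Lb k. \<Sum>v\<leftarrow>gwords w. zc v t)"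
      by (simp add: zsum_def comp_def sum_list_concat_map)
    also have "\<dots> = (\<Sum>w\<leftarrow>Lb k. Rc (zc w) t) + (\<Sum>w\<leftarrow>Lb k. Dc (zc w) t)"
      by (simp add: zc_snoc_C gwords_zc)
    also have "\<dots> = Rc (zsum k) t + Dc (zsum k) t"
      unfolding zsum_def[abs_def] by (simp add: Rc_sum_list Dc_sum_list)
    also have "\<dots> = Rop (psi k) t" using Suc by (simp add: Rop_eq)
    also have "\<dots> = psi (Suc k) t" by (rule R_psi)
    finally show "zsum (Suc k) t = psi (Suc k) t" .
  qed
qed

lemma gw_C: "u @ [D] @ v \<in> set (gwords (u @ [C] @ v))"
  by (induction u rule: gwords.induct) auto

lemma gw_D: "u @ [C, D] @ v \<in> set (gwords (u @ [D] @ v))"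
  by (induction u rule: gwords.induct) auto

lemma count_map_snoc: "count_list (map (\<lambda>v. v @ [x]) L) (w @ [x]) = count_list L w"
  by (induction L) auto

lemma count_gw1: "w \<in> set (gwords v1) \<Longrightarrow> count_list L v1 \<le> (\<Sum>v\<leftarrow>L. count_list (gwords v) w)"
proof (induction L)
  case Nil then show ?case by simp
next
  case (Cons x L)
  have "x = v1 \<Longrightarrow> 1 \<le> count_list (gwords x) w" using Cons(2)
    by (metis count_list_0_iff less_one not_le)
  then show ?case using Cons by auto
qed

lemma count_gw2: "v1 \<noteq> v2 \<Longrightarrow> w \<in> set (gwords v1) \<Longrightarrow> w \<in> set (gwords v2) \<Longrightarrow>
  count_list L v1 + count_list L v2 \<le> (\<Sum>v\<leftarrow>L. count_list (gwords v) w)"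
proof (induction L)
  case Nil then show ?case by simp
next
  case (Cons x L)
  have "x = v1 \<Longrightarrow> 1 \<le> count_list (gwords x) w" using Cons(3)
    by (metis count_list_0_iff less_one not_le)
  moreover have "x = v2 \<Longrightarrow> 1 \<le> count_list (gwords x) w" using Cons(4)
    by (metis count_list_0_iff less_one not_le)
  ultimately show ?case using Cons by auto
qed

lemma count_Lb_Suc: "count_list (Lb (Suc k)) w =
   count_list (map (\<lambda>v. v @ [C]) (Lb k)) w + (\<Sum>v\<leftarrow>Lb k. count_list (gwords v) w)"
  by (simp add: count_list_concat comp_def)

lemma deg_Suc: "cd_deg w = Suc n \<Longrightarrow> (\<exists>v. w = C # v \<and> cd_deg v = n) \<or> (\<exists>v. w = D # v \<and> Suc (cd_deg v) = n)"
  by (cases w rule: cd_deg.cases) auto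

lemma deg_0: "cd_deg w = 0 \<Longrightarrow> w = []"
  by (cases w rule: cd_deg.cases) auto

lemma deg3: "cd_deg w = 3 \<Longrightarrow> w = [C,C,C] \<or> w = [C,D] \<or> w = [D,C]"
proof -
  assume a: "cd_deg w = 3"
  have d1: "cd_deg v = 1 \<Longrightarrow> v = [C]" for v
    using deg_Suc[of v 0] deg_0 by auto
  have d2: "cd_deg v = 2 \<Longrightarrow> v = [C,C] \<or> v = [D]" for v
    using deg_Suc[of v 1] d1 deg_0 by (auto simp: numeral_2_eq_2)
  show ?thesis using deg_Suc[of w 2] a d1 d2 by (auto simp: numeral_3_eq_3)
qed

lemma Lb3: "Lb 3 = [[C,C,C],[D,C],[D,C],[C,D],[C,D]]"
  by (simp add: numeral_3_eq_3)

lemma cd_deg_snoc_C: "cd_deg (w @ [C]) = Suc (cd_deg w)"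
  by (simp add: cd_deg_append)
lemma cd_deg_snoc_D: "cd_deg (w @ [D]) = Suc (Suc (cd_deg w))"
  by (simp add: cd_deg_append)

lemma Lb_bound: "3 \<le> k \<Longrightarrow> cd_deg w = k \<Longrightarrow> 2 ^ count_list w D \<le> count_list (Lb k) w"
proof (induction k arbitrary: w rule: nat_induct_at_least)
  case base
  then show ?case using deg3[of w] by (auto simp: Lb3)
next
  case (Suc k)
  have "w \<noteq> []" using Suc by auto
  then obtain w' x where w: "w = w' @ [x]" by (metis rev_exhaust)
  show ?case
  proof (cases x)
    case C
    have dw: "cd_deg w' = k" using Suc w C by (simp add: cd_deg_snoc_C)
    have "2 ^ count_list w D = 2 ^ count_list w' D" using w C by simp
    also have "\<dots> \<le> count_list (Lb k) w'" using Suc dw by simp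
    also have "\<dots> = count_list (map (\<lambda>v. v @ [C]) (Lb k)) w" using w C by (simp add: count_map_snoc)
    also have "\<dots> \<le> count_list (Lb (Suc k)) w" unfolding count_Lb_Suc by simp
    finally show ?thesis .
  next
    case D
    have dw: "Suc (Suc (cd_deg w')) = Suc k" using Suc w D by (simp add: cd_deg_snoc_D)
    then have "w' \<noteq> []" using Suc by auto
    then obtain x' y where w': "w' = x' @ [y]" by (metis rev_exhaust)
    show ?thesis
    proof (cases y)
      case C
      define v where "v = x' @ [D]"
      have dv: "cd_deg v = k" using dw w' C by (simp add: v_def cd_deg_append)
      have mem: "w \<in> set (gwords v)" using gw_D[of x' "[]"] w w' C D v_def by simp
      have "2 ^ count_list w D = 2 ^ count_list v D" using w w' C D v_def by simp
      also have "\<dots> \<le> count_list (Lb k) v" using Suc dv by simp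
      also have "\<dots> \<le> (\<Sum>v\<leftarrow>Lb k. count_list (gwords v) w)" by (rule count_gw1[OF mem])
      also have "\<dots> \<le> count_list (Lb (Suc k)) w" unfolding count_Lb_Suc by simp
      finally show ?thesis .
    next
      case D2: D
      define v1 where "v1 = x' @ [D, C]"
      define v2 where "v2 = x' @ [C, D]"
      have dv1: "cd_deg v1 = k" using dw w' D2 by (simp add: v1_def cd_deg_append)
      have dv2: "cd_deg v2 = k" using dw w' D2 by (simp add: v2_def cd_deg_append)
      have m1: "w \<in> set (gwords v1)" using gw_C[of "x' @ [D]" "[]"] w w' D D2 v1_def by simp
      have m2: "w \<in> set (gwords v2)" using gw_C[of x' "[D]"] w w' D D2 v2_def by simp
      have ne: "v1 \<noteq> v2" by (simp add: v1_def v2_def)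
      have c1: "count_list v1 D = count_list x' D + 1" by (simp add: v1_def)
      have c2: "count_list v2 D = count_list x' D + 1" by (simp add: v2_def)
      have cw: "count_list w D = count_list x' D + 2" using w w' D D2 by simp
      have "(2::nat) ^ count_list w D = 2 ^ count_list v1 D + 2 ^ count_list v2 D" using c1 c2 cw by simp
      also have "\<dots> \<le> count_list (Lb k) v1 + count_list (Lb k) v2" using Suc dv1 dv2 by (simp add: add_mono)
      also have "\<dots> \<le> (\<Sum>v\<leftarrow>Lb k. count_list (gwords v) w)" by (rule count_gw2[OF ne m1 m2])
      also have "\<dots> \<le> count_list (Lb (Suc k)) w" unfolding count_Lb_Suc by simp
      finally show ?thesis .
    qed
  qed
qed

section \<open>Uniqueness of the cd-index\<close>

lemma cd_UNIV: "x = C \<or> x = D" for x :: cd by (cases x) auto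

lemma length_le_deg: "length w \<le> cd_deg w"
  by (induction w rule: cd_deg.induct) auto

lemma finite_deg: "finite {w. cd_deg w = n}"
proof (rule finite_subset)
  show "{w. cd_deg w = n} \<subseteq> {w. set w \<subseteq> {C, D} \<and> length w \<le> n}"
    using length_le_deg cd_UNIV by fastforce
  show "finite {w. set w \<subseteq> {C, D} \<and> length w \<le> n}" by (rule finite_lists_length_le) simp
qed

lemma deg_set_SS: "{w. cd_deg w = Suc (Suc k)} = (\<lambda>v. C # v) ` {v. cd_deg v = Suc k} \<union> (\<lambda>v. D # v) ` {v. cd_deg v = k}"
proof
  show "{w. cd_deg w = Suc (Suc k)} \<subseteq> (\<lambda>v. C # v) ` {v. cd_deg v = Suc k} \<union> (\<lambda>v. D # v) ` {v. cd_deg v = k}"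
    using deg_Suc[of _ "Suc k"] by auto
qed auto

lemma sum_deg_SS: "(\<Sum>w\<in>{w. cd_deg w = Suc (Suc k)}. g w) =
   (\<Sum>v\<in>{v. cd_deg v = Suc k}. g (C # v)) + (\<Sum>v\<in>{v. cd_deg v = k}. g (D # v))"
proof -
  have "(\<Sum>w\<in>{w. cd_deg w = Suc (Suc k)}. g w) =
     (\<Sum>w\<in>(\<lambda>v. C # v) ` {v. cd_deg v = Suc k}. g w) + (\<Sum>w\<in>(\<lambda>v. D # v) ` {v. cd_deg v = k}. g w)"
    unfolding deg_set_SS by (rule sum.union_disjoint) (auto simp: finite_deg)
  also have "\<dots> = (\<Sum>v\<in>{v. cd_deg v = Suc k}. g (C # v)) + (\<Sum>v\<in>{v. cd_deg v = k}. g (D # v))"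
    by (simp add: sum.reindex)
  finally show ?thesis .
qed

lemma deg_set_0: "{w. cd_deg w = 0} = {[]}" using deg_0 by auto
lemma deg_set_1: "{w. cd_deg w = Suc 0} = {[C]}" using deg_Suc[of _ 0] deg_0 by auto

lemma cd_unique_aux:
  "\<forall>P. (\<forall>u. length u = n \<longrightarrow> (\<Sum>w\<in>{w. cd_deg w = n}. P w * cd_expand w u) = 0)
       \<longrightarrow> (\<forall>w. cd_deg w = n \<longrightarrow> P w = (0::int))"
proof (induction n rule: less_induct)
  case (less n)
  show ?case
  proof (intro allI impI)
    fix P w
    assume h: "\<forall>u. length u = n \<longrightarrow> (\<Sum>w\<in>{w. cd_deg w = n}. P w * cd_expand w u) = 0"
      and dw: "cd_deg w = n"
    consider "n = 0" | "n = Suc 0" | k where "n = Suc (Suc k)" by (metis not0_implies_Suc)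
    then show "P w = 0"
    proof cases
      case 1
      have "w = []" using dw 1 deg_0 by simp
      then show ?thesis using h[rule_format, of "[]"] 1 by (simp add: deg_set_0)
    next
      case 2
      have w: "w = [C]" using deg_Suc[of w 0] deg_0 dw 2 by auto
      have "(\<Sum>w\<in>{w. cd_deg w = n}. P w * cd_expand w [False]) = 0" using h 2 by simp
      then show ?thesis using w 2 by (simp add: deg_set_1)
    next
      case 3
      have sp: "(\<Sum>w\<in>{w. cd_deg w = n}. P w * cd_expand w (a # b # u)) =
          (\<Sum>v\<in>{v. cd_deg v = Suc k}. P (C # v) * cd_expand v (b # u))
          + (\<Sum>v\<in>{v. cd_deg v = k}. P (D # v) * (if a \<noteq> b then cd_expand v u else 0))" for a b u
        unfolding 3 sum_deg_SS by simp
      have kn: "k < n" using 3 by simp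
      have hD: "\<forall>u. length u = k \<longrightarrow> (\<Sum>w\<in>{w. cd_deg w = k}. P (D # w) * cd_expand w u) = 0"
        proof (intro allI impI)
          fix u :: "bool list" assume lu: "length u = k"
          have e1: "(\<Sum>v\<in>{v. cd_deg v = Suc k}. P (C # v) * cd_expand v (False # u)) = 0"
            using h[rule_format, of "False # False # u"] sp[of False False u] lu 3 by simp
          have e2: "(\<Sum>v\<in>{v. cd_deg v = Suc k}. P (C # v) * cd_expand v (False # u))
              + (\<Sum>v\<in>{v. cd_deg v = k}. P (D # v) * cd_expand v u) = 0"
            using h[rule_format, of "True # False # u"] sp[of True False u] lu 3 by simp
          show "(\<Sum>w\<in>{w. cd_deg w = k}. P (D # w) * cd_expand w u) = 0" using e1 e2 by simp
        qed
      have PD: "\<forall>v. cd_deg v = k \<longrightarrow> P (D # v) = 0"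
        using spec[OF less[OF kn], of "\<lambda>v. P (D # v)"] hD by blast
      have kn2: "Suc k < n" using 3 by simp
      have hC: "\<forall>u. length u = Suc k \<longrightarrow> (\<Sum>w\<in>{w. cd_deg w = Suc k}. P (C # w) * cd_expand w u) = 0"
        proof (intro allI impI)
          fix u :: "bool list" assume lu: "length u = Suc k"
          then obtain b u' where u: "u = b # u'" by (cases u) auto
          have z: "(\<Sum>v\<in>{v. cd_deg v = k}. P (D # v) * (if False \<noteq> b then cd_expand v u' else 0)) = 0"
            using PD by (intro sum.neutral) auto
          show "(\<Sum>w\<in>{w. cd_deg w = Suc k}. P (C # w) * cd_expand w u) = 0"
            using h[rule_format, of "False # b # u'"] sp[of False b u'] lu 3 u z by simp
        qed
      have PC: "\<forall>v. cd_deg v = Suc k \<longrightarrow> P (C # v) = 0"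
        using spec[OF less[OF kn2], of "\<lambda>v. P (C # v)"] hC by blast
      have "(\<exists>v. w = C # v \<and> cd_deg v = Suc k) \<or> (\<exists>v. w = D # v \<and> Suc (cd_deg v) = Suc k)"
        using deg_Suc[of w "Suc k"] dw 3 by simp
      then show ?thesis using PC PD by auto
    qed
  qed
qed

lemma cd_index_eq:
  assumes "is_cd_index E lt rk n Phi"
  shows "cd_index E lt rk n = Phi"
  unfolding cd_index_def
proof (rule the_equality)
  show "is_cd_index E lt rk n Phi" by (rule assms)
  fix Phi' assume a: "is_cd_index E lt rk n Phi'"
  show "Phi' = Phi"
  proof (rule ext)
    fix w
    show "Phi' w = Phi w"
    proof (cases "cd_deg w = n")
      case False then show ?thesis using a assms by (simp add: is_cd_index_def)
    next
      case True
      have "\<forall>u. length u = n \<longrightarrow> (\<Sum>w\<in>{w. cd_deg w = n}. (Phi' w - Phi w) * cd_expand w u) = 0"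
        using a assms by (simp add: is_cd_index_def left_diff_distrib sum_subtractf)
      then have "\<forall>w. cd_deg w = n \<longrightarrow> Phi' w - Phi w = 0"
        using spec[OF cd_unique_aux[of n], of "\<lambda>w. Phi' w - Phi w"] by blast
      then show ?thesis using True by simp
    qed
  qed
qed

section \<open>Moebius inversion\<close>

fun subl :: "bool list \<Rightarrow> bool list list" where
  "subl [] = [[]]"
| "subl (a # t) = map ((#) False) (subl t) @ (if a then map ((#) True) (subl t) else [])"

lemma subl_len: "v \<in> set (subl t) \<Longrightarrow> length v = length t"
  by (induction t arbitrary: v) (auto split: if_splits)

lemma zc_subl: "zc w t = (\<Sum>v\<leftarrow>subl t. cd_expand w v)"
proof (induction w arbitrary: t)
  case Nil
  show ?case
  proof (cases t)
    case Nil then show ?thesis by simp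
  next
    case (Cons a t')
    have "(\<Sum>v\<leftarrow>subl t. cd_expand [] v) = 0"
      using Cons by (simp add: comp_def)
    then show ?thesis using Cons by simp
  qed
next
  case (Cons x w)
  show ?case
  proof (cases x)
    case C
    show ?thesis
    proof (cases t)
      case Nil then show ?thesis using C by simp
    next
      case (Cons a t')
      then show ?thesis using C Cons.IH[of t'] by (simp add: comp_def)
    qed
  next
    case D
    show ?thesis
    proof (cases "\<exists>a b t''. t = a # b # t''")
      case True
      then obtain a b t'' where t: "t = a # b # t''" by blast
      then show ?thesis using D Cons.IH[of t''] by (simp add: comp_def)
    next
      case False
      then have "t = [] \<or> (\<exists>a. t = [a])" by (cases t; cases "tl t") auto
      then show ?thesis using D by (auto simp: comp_def)
    qed
  qed
qed

abbreviation cnt :: "bool list \<Rightarrow> nat" where "cnt t \<equiv> count_list t True"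

lemma subl_cnt: "t \<in> set (subl u) \<Longrightarrow> cnt t \<le> cnt u"
  by (induction u arbitrary: t) (auto split: if_splits intro: le_SucI)

lemma mob: "(\<Sum>t\<leftarrow>subl u. (-1::int) ^ (cnt u - cnt t) * (\<Sum>v\<leftarrow>subl t. g v)) = g u"
proof (induction u arbitrary: g)
  case Nil then show ?case by simp
next
  case (Cons a u')
  show ?case
  proof (cases a)
    case False
    then show ?thesis using Cons.IH[of "\<lambda>v. g (False # v)"] by (simp add: comp_def)
  next
    case True
    let ?S = "subl u'"
    have "(\<Sum>t\<leftarrow>subl (a # u'). (-1::int) ^ (cnt (a # u') - cnt t) * (\<Sum>v\<leftarrow>subl t. g v))
      = (\<Sum>t\<leftarrow>?S. (-1::int) ^ (Suc (cnt u') - cnt t) * (\<Sum>v\<leftarrow>subl t. g (False # v)))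
      + (\<Sum>t\<leftarrow>?S. (-1::int) ^ (cnt u' - cnt t) * ((\<Sum>v\<leftarrow>subl t. g (False # v)) + (\<Sum>v\<leftarrow>subl t. g (True # v))))"
      using True by (simp add: comp_def)
    also have "\<dots> = (\<Sum>t\<leftarrow>?S. (-1::int) ^ (Suc (cnt u') - cnt t) * (\<Sum>v\<leftarrow>subl t. g (False # v))
       + (-1::int) ^ (cnt u' - cnt t) * ((\<Sum>v\<leftarrow>subl t. g (False # v)) + (\<Sum>v\<leftarrow>subl t. g (True # v))))"
      by (simp add: sum_list_addf)
    also have "\<dots> = (\<Sum>t\<leftarrow>?S. (-1::int) ^ (cnt u' - cnt t) * (\<Sum>v\<leftarrow>subl t. g (True # v)))"
    proof (rule arg_cong[where f = sum_list], rule map_cong[OF refl])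
      fix t assume "t \<in> set ?S"
      then have "cnt t \<le> cnt u'" by (rule subl_cnt)
      then have "Suc (cnt u') - cnt t = Suc (cnt u' - cnt t)" by simp
      then show "(-1::int) ^ (Suc (cnt u') - cnt t) * (\<Sum>v\<leftarrow>subl t. g (False # v))
       + (-1::int) ^ (cnt u' - cnt t) * ((\<Sum>v\<leftarrow>subl t. g (False # v)) + (\<Sum>v\<leftarrow>subl t. g (True # v)))
        = (-1::int) ^ (cnt u' - cnt t) * (\<Sum>v\<leftarrow>subl t. g (True # v))"
        by (simp add: algebra_simps)
    qed
    also have "\<dots> = g (a # u')" using Cons.IH[of "\<lambda>v. g (True # v)"] True by simp
    finally show ?thesis .
  qed
qed

lemma bpos_Cons: "b_positions (a # t) = (if a then insert 1 (Suc ` b_positions t) else Suc ` b_positions t)"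
proof (rule set_eqI)
  fix i
  show "i \<in> b_positions (a # t) \<longleftrightarrow> i \<in> (if a then insert 1 (Suc ` b_positions t) else Suc ` b_positions t)"
  proof (cases i)
    case 0 then show ?thesis by (auto simp: b_positions_def)
  next
    case (Suc j)
    show ?thesis
    proof (cases j)
      case 0 then show ?thesis using Suc by (auto simp: b_positions_def)
    next
      case (Suc j')
      then show ?thesis using \<open>i = Suc j\<close> by (auto simp: b_positions_def)
    qed
  qed
qed

lemma bpos_Nil: "b_positions [] = {}" by (auto simp: b_positions_def)

lemma bpos_sub: "b_positions t \<subseteq> {1..length t}" by (auto simp: b_positions_def)

lemma bpos_finite: "finite (b_positions t)" using bpos_sub finite_subset by blast

lemma bpos_nth: "i < length t \<Longrightarrow> (Suc i \<in> b_positions t) = t ! i"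
  by (auto simp: b_positions_def)

lemma card_bpos: "card (b_positions t) = cnt t"
proof (induction t)
  case Nil then show ?case by (simp add: bpos_Nil)
next
  case (Cons a t)
  have "1 \<notin> Suc ` b_positions t" using bpos_sub[of t] by auto
  moreover have "card (Suc ` b_positions t) = card (b_positions t)" by (simp add: card_image)
  ultimately show ?case using Cons bpos_finite[of t] by (simp add: bpos_Cons)
qed

lemma subl_bpos: "t \<in> set (subl u) \<Longrightarrow> b_positions t \<subseteq> b_positions u"
proof (induction u arbitrary: t)
  case Nil then show ?case by simp
next
  case (Cons a u)
  then obtain b t' where t: "t = b # t'" "t' \<in> set (subl u)" "b \<longrightarrow> a"
    by (auto split: if_splits)
  have "Suc ` b_positions t' \<subseteq> Suc ` b_positions u" using Cons.IH[OF t(2)] by blast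
  then show ?case using t by (auto simp: bpos_Cons)
qed

lemma bpos_inj: "length t1 = length t2 \<Longrightarrow> b_positions t1 = b_positions t2 \<Longrightarrow> t1 = t2"
proof (rule nth_equalityI)
  fix i assume "length t1 = length t2" "b_positions t1 = b_positions t2" "i < length t1"
  then show "t1 ! i = t2 ! i" using bpos_nth[of i t1] bpos_nth[of i t2] by simp
qed

lemma subl_surj: "T \<subseteq> b_positions u \<Longrightarrow> \<exists>t\<in>set (subl u). b_positions t = T"
proof (induction u arbitrary: T)
  case Nil then show ?case by (simp add: bpos_Nil)
next
  case (Cons a u)
  define T' where "T' = {j. 1 \<le> j \<and> Suc j \<in> T}"
  have T'sub: "T' \<subseteq> b_positions u" using Cons(2) by (auto simp: T'_def bpos_Cons split: if_splits)
  obtain t' where t': "t' \<in> set (subl u)" "b_positions t' = T'" using Cons(1)[OF T'sub] by blast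
  have z: "0 \<notin> T" using Cons(2) bpos_sub[of "a # u"] by auto
  define t where "t = (1 \<in> T) # t'"
  have "b_positions t = T"
  proof (rule set_eqI)
    fix i show "i \<in> b_positions t \<longleftrightarrow> i \<in> T"
    proof (cases i)
      case 0 then show ?thesis using z by (auto simp: t_def bpos_Cons)
    next
      case (Suc j)
      then show ?thesis using t'(2) by (cases j) (auto simp: t_def bpos_Cons T'_def)
    qed
  qed
  moreover have "t \<in> set (subl (a # u))"
  proof -
    have "1 \<in> T \<Longrightarrow> a" using Cons(2) bpos_sub[of u] by (auto simp: bpos_Cons split: if_splits)
    then show ?thesis using t'(1) by (auto simp: t_def)
  qed
  ultimately show ?case by blast
qed

lemma distinct_subl: "distinct (subl u)"
  by (induction u) (auto simp: distinct_map)

lemma flag_h_list: "flag_h E lt rk (b_positions u) =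
   (\<Sum>t\<leftarrow>subl u. (-1) ^ (cnt u - cnt t) * flag_f E lt rk (b_positions t))"
proof -
  have P: "Pow (b_positions u) = b_positions ` set (subl u)"
    using subl_surj subl_bpos by blast
  have inj: "inj_on b_positions (set (subl u))"
    by (rule inj_onI) (auto intro: bpos_inj simp: subl_len)
  have "flag_h E lt rk (b_positions u) =
      (\<Sum>t\<in>set (subl u). (-1) ^ card (b_positions u - b_positions t) * flag_f E lt rk (b_positions t))"
    unfolding flag_h_def P by (simp add: sum.reindex[OF inj])
  also have "\<dots> = (\<Sum>t\<in>set (subl u). (-1) ^ (cnt u - cnt t) * flag_f E lt rk (b_positions t))"
  proof (rule sum.cong[OF refl])
    fix t assume "t \<in> set (subl u)"
    then have "card (b_positions u - b_positions t) = cnt u - cnt t"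
      using subl_bpos card_Diff_subset bpos_finite card_bpos by metis
    then show "(-1) ^ card (b_positions u - b_positions t) * flag_f E lt rk (b_positions t) =
       (-1) ^ (cnt u - cnt t) * flag_f E lt rk (b_positions t)" by simp
  qed
  also have "\<dots> = (\<Sum>t\<leftarrow>subl u. (-1) ^ (cnt u - cnt t) * flag_f E lt rk (b_positions t))"
    by (simp add: sum_list_distinct_conv_sum_set distinct_subl)
  finally show ?thesis .
qed

lemma swap_sum: "(\<Sum>w\<in>A. P w * (\<Sum>v\<leftarrow>L. e w v)) = (\<Sum>v\<leftarrow>L. \<Sum>w\<in>A. P w * e w v)"
  for P :: "'a \<Rightarrow> int"
  by (induction L) (auto simp: sum.distrib distrib_left)

lemma mob_main:
  assumes f: "\<And>t. length t = n \<Longrightarrow> (\<Sum>w\<in>{w. cd_deg w = n}. P w * zc w t) = flag_f E lt rk (b_positions t)"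
    and u: "length u = n"
  shows "(\<Sum>w\<in>{w. cd_deg w = n}. P w * cd_expand w u) = flag_h E lt rk (b_positions u)"
proof -
  let ?G = "\<lambda>v. \<Sum>w\<in>{w. cd_deg w = n}. P w * cd_expand w v"
  have "flag_h E lt rk (b_positions u) = (\<Sum>t\<leftarrow>subl u. (-1) ^ (cnt u - cnt t) * flag_f E lt rk (b_positions t))"
    by (rule flag_h_list)
  also have "\<dots> = (\<Sum>t\<leftarrow>subl u. (-1) ^ (cnt u - cnt t) * (\<Sum>v\<leftarrow>subl t. ?G v))"
  proof (rule arg_cong[where f = sum_list], rule map_cong[OF refl])
    fix t assume "t \<in> set (subl u)"
    then have "length t = n" using subl_len u by simp
    then have "flag_f E lt rk (b_positions t) = (\<Sum>w\<in>{w. cd_deg w = n}. P w * zc w t)" using f by simp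
    also have "\<dots> = (\<Sum>v\<leftarrow>subl t. ?G v)" by (simp add: zc_subl swap_sum)
    finally show "(-1) ^ (cnt u - cnt t) * flag_f E lt rk (b_positions t) = (-1) ^ (cnt u - cnt t) * (\<Sum>v\<leftarrow>subl t. ?G v)"
      by simp
  qed
  also have "\<dots> = ?G u" by (rule mob)
  finally show ?thesis by simp
qed

definition nes :: "nat set \<Rightarrow> nat set set" where "nes A = {F. F \<noteq> {} \<and> F \<subseteq> A}"

definition chs :: "nat set set \<Rightarrow> nat set \<Rightarrow> nat set set set" where
  "chs Fs T = {c. c \<subseteq> Fs \<and> is_chain (\<subset>) c \<and> card ` c = T}"

lemma chain_card_eq: "is_chain (\<subset>) c \<Longrightarrow> F \<in> c \<Longrightarrow> G \<in> c \<Longrightarrow> finite F \<Longrightarrow> finite G \<Longrightarrow> card F = card G \<Longrightarrow> F = G"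
  unfolding is_chain_def by (metis psubset_card_mono less_irrefl)

lemma finite_chs: "finite A \<Longrightarrow> finite (chs (nes A) T)"
proof -
  assume "finite A"
  then have "finite (Pow (Pow A))" by simp
  moreover have "chs (nes A) T \<subseteq> Pow (Pow A)" by (auto simp: chs_def nes_def)
  ultimately show ?thesis using finite_subset by blast
qed

lemma top_decomp:
  assumes A: "finite A" and k: "1 \<le> k" and T: "\<forall>s\<in>T. s < k"
  shows "chs (nes A) (insert k T) = (\<Union>X\<in>{X. X \<subseteq> A \<and> card X = k}. insert X ` chs (nes X) T)"
proof
  show "chs (nes A) (insert k T) \<subseteq> (\<Union>X\<in>{X. X \<subseteq> A \<and> card X = k}. insert X ` chs (nes X) T)"
  proof
    fix c assume c: "c \<in> chs (nes A) (insert k T)"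
    then have cA: "c \<subseteq> nes A" and ch: "is_chain (\<subset>) c" and cc: "card ` c = insert k T"
      by (auto simp: chs_def)
    have fin: "F \<in> c \<Longrightarrow> finite F" for F using cA A by (auto simp: nes_def intro: finite_subset)
    obtain X where X: "X \<in> c" "card X = k" using cc by (metis imageE insertI1)
    have XA: "X \<subseteq> A" using X cA by (auto simp: nes_def)
    have kT: "k \<notin> T" using T by auto
    have sub: "F \<subset> X" if F: "F \<in> c" "F \<noteq> X" for F
    proof -
      have "F \<subset> X \<or> X \<subset> F" using ch F X unfolding is_chain_def by blast
      moreover have "\<not> X \<subset> F"
      proof
        assume "X \<subset> F"
        then have "card X < card F" using fin[OF F(1)] psubset_card_mono by blast
        moreover have "card F \<in> insert k T" using cc F by auto
        ultimately show False using X T by auto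
      qed
      ultimately show ?thesis by blast
    qed
    define c' where "c' = c - {X}"
    have "c' \<in> chs (nes X) T"
    proof -
      have "c' \<subseteq> nes X" using sub cA by (auto simp: c'_def nes_def)
      moreover have "is_chain (\<subset>) c'" using ch by (auto simp: c'_def is_chain_def)
      moreover have "card ` c' = T"
      proof
        show "card ` c' \<subseteq> T"
        proof
          fix s assume "s \<in> card ` c'"
          then obtain F where F: "F \<in> c" "F \<noteq> X" "s = card F" by (auto simp: c'_def)
          have "card F \<noteq> k" using chain_card_eq[OF ch F(1) X(1) fin[OF F(1)] fin[OF X(1)]] F X by auto
          then show "s \<in> T" using cc F by auto
        qed
        show "T \<subseteq> card ` c'"
        proof
          fix s assume "s \<in> T"
          then obtain F where F: "F \<in> c" "card F = s" using cc by (metis imageE insertCI)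
          then have "F \<noteq> X" using X kT \<open>s \<in> T\<close> by auto
          then show "s \<in> card ` c'" using F by (auto simp: c'_def)
        qed
      qed
      ultimately show ?thesis by (simp add: chs_def)
    qed
    moreover have "c = insert X c'" using X by (auto simp: c'_def)
    ultimately show "c \<in> (\<Union>X\<in>{X. X \<subseteq> A \<and> card X = k}. insert X ` chs (nes X) T)"
      using XA X by blast
  qed
next
  show "(\<Union>X\<in>{X. X \<subseteq> A \<and> card X = k}. insert X ` chs (nes X) T) \<subseteq> chs (nes A) (insert k T)"
  proof
    fix c assume "c \<in> (\<Union>X\<in>{X. X \<subseteq> A \<and> card X = k}. insert X ` chs (nes X) T)"
    then obtain X c' where X: "X \<subseteq> A" "card X = k" and c': "c' \<in> chs (nes X) T" and c: "c = insert X c'"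
      by blast
    have c'X: "c' \<subseteq> nes X" and ch: "is_chain (\<subset>) c'" and cc: "card ` c' = T" using c' by (auto simp: chs_def)
    have Xne: "X \<noteq> {}" using X k by auto
    have sub: "F \<subset> X" if "F \<in> c'" for F
    proof -
      have "F \<subseteq> X" using c'X that by (auto simp: nes_def)
      moreover have "card F \<in> T" using cc that by auto
      then have "F \<noteq> X" using X T by auto
      ultimately show ?thesis by blast
    qed
    have "c \<subseteq> nes A" using c c'X X Xne by (auto simp: nes_def)
    moreover have "is_chain (\<subset>) c" using ch sub c unfolding is_chain_def by blast
    moreover have "card ` c = insert k T" using c cc X by auto
    ultimately show "c \<in> chs (nes A) (insert k T)" by (simp add: chs_def)
  qed
qed

lemma CH_top:
  assumes A: "finite A" and k: "1 \<le> k" and T: "\<forall>s\<in>T. s < k"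
  shows "card (chs (nes A) (insert k T)) = (\<Sum>X\<in>{X. X \<subseteq> A \<and> card X = k}. card (chs (nes X) T))"
proof -
  have finX: "finite {X. X \<subseteq> A \<and> card X = k}" using A by simp
  have notin: "X \<notin> c" if "card X = k" "c \<in> chs (nes X) T" for X c
    using that T by (auto simp: chs_def)
  have "card (chs (nes A) (insert k T)) = (\<Sum>X\<in>{X. X \<subseteq> A \<and> card X = k}. card (insert X ` chs (nes X) T))"
    unfolding top_decomp[OF A k T]
  proof (rule card_UN_disjoint[OF finX])
    show "\<forall>X\<in>{X. X \<subseteq> A \<and> card X = k}. finite (insert X ` chs (nes X) T)"
    proof
      fix X assume "X \<in> {X. X \<subseteq> A \<and> card X = k}"
      then have "finite X" using A finite_subset by blast
      then show "finite (insert X ` chs (nes X) T)" using finite_chs by blast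
    qed
    show "\<forall>X\<in>{X. X \<subseteq> A \<and> card X = k}. \<forall>Y\<in>{X. X \<subseteq> A \<and> card X = k}. X \<noteq> Y \<longrightarrow>
        insert X ` chs (nes X) T \<inter> insert Y ` chs (nes Y) T = {}"
    proof (intro ballI impI)
      fix X Y assume X: "X \<in> {X. X \<subseteq> A \<and> card X = k}" and Y: "Y \<in> {X. X \<subseteq> A \<and> card X = k}" and ne: "X \<noteq> Y"
      show "insert X ` chs (nes X) T \<inter> insert Y ` chs (nes Y) T = {}"
      proof (rule ccontr)
        assume "insert X ` chs (nes X) T \<inter> insert Y ` chs (nes Y) T \<noteq> {}"
        then obtain c1 c2 where c1: "c1 \<in> chs (nes X) T" and c2: "c2 \<in> chs (nes Y) T" and e: "insert X c1 = insert Y c2"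
          by blast
        have "X \<in> insert Y c2" using e by (metis insertI1)
        then have "X \<in> c2" using ne by simp
        then have "card X \<in> T" using c2 by (auto simp: chs_def)
        then show False using X T by auto
      qed
    qed
  qed
  also have "\<dots> = (\<Sum>X\<in>{X. X \<subseteq> A \<and> card X = k}. card (chs (nes X) T))"
  proof (rule sum.cong[OF refl])
    fix X assume "X \<in> {X. X \<subseteq> A \<and> card X = k}"
    then have kX: "card X = k" by simp
    have "inj_on (insert X) (chs (nes X) T)"
    proof (rule inj_onI)
      fix c1 c2 assume c1: "c1 \<in> chs (nes X) T" and c2: "c2 \<in> chs (nes X) T" and e: "insert X c1 = insert X c2"
      have "X \<notin> c1" "X \<notin> c2" using notin[OF kX c1] notin[OF kX c2] by auto
      then show "c1 = c2" using e by (simp add: insert_ident)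
    qed
    then show "card (insert X ` chs (nes X) T) = card (chs (nes X) T)" by (rule card_image)
  qed
  finally show ?thesis .
qed

lemma bpos_snoc: "b_positions (s @ [x]) = (if x then insert (Suc (length s)) (b_positions s) else b_positions s)"
  by (auto simp: b_positions_def nth_append le_Suc_eq)

lemma chs_empty: "chs Fs {} = {{}}"
  by (auto simp: chs_def is_chain_def)

lemma CH_kkr: "finite A \<Longrightarrow> card (chs (nes A) (b_positions t)) = kkr (card A) (rev t)"
proof (induction t arbitrary: A rule: rev_induct)
  case Nil then show ?case by (simp add: bpos_Nil chs_empty)
next
  case (snoc x s)
  show ?case
  proof (cases x)
    case False then show ?thesis using snoc by (simp add: bpos_snoc)
  next
    case True
    have T: "\<forall>j\<in>b_positions s. j < Suc (length s)" using bpos_sub[of s] by auto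
    have "card (chs (nes A) (b_positions (s @ [x]))) =
        (\<Sum>X\<in>{X. X \<subseteq> A \<and> card X = Suc (length s)}. card (chs (nes X) (b_positions s)))"
      using True CH_top[OF snoc(2) _ T] by (simp add: bpos_snoc)
    also have "\<dots> = (\<Sum>X\<in>{X. X \<subseteq> A \<and> card X = Suc (length s)}. kkr (Suc (length s)) (rev s))"
    proof (rule sum.cong[OF refl])
      fix X assume X: "X \<in> {X. X \<subseteq> A \<and> card X = Suc (length s)}"
      then have "finite X" using snoc(2) finite_subset by blast
      then show "card (chs (nes X) (b_positions s)) = kkr (Suc (length s)) (rev s)"
        using snoc(1) X by auto
    qed
    also have "\<dots> = (card A choose Suc (length s)) * kkr (Suc (length s)) (rev s)"
      using n_subsets[OF snoc(2)] by simp
    finally show ?thesis using True by simp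
  qed
qed

definition Gam :: "nat \<Rightarrow> nat \<Rightarrow> nat set set" where
  "Gam n i = {F. F \<noteq> {} \<and> (\<exists>j\<le>i. F \<subseteq> {0..n} - {j})}"

definition Bdr :: "nat \<Rightarrow> nat \<Rightarrow> nat set set" where
  "Bdr n i = {F \<in> Gam n i. \<exists>j k. j \<le> i \<and> i < k \<and> k \<le> n \<and> j \<notin> F \<and> k \<notin> F}"

lemma finite_chs_gen: "finite Fs \<Longrightarrow> finite (chs Fs T)"
proof -
  assume "finite Fs"
  moreover have "chs Fs T \<subseteq> Pow Fs" by (auto simp: chs_def)
  ultimately show ?thesis using finite_subset by blast
qed

lemma finite_Gam: "finite (Gam n i)"
proof -
  have "Gam n i \<subseteq> Pow {0..n}" by (auto simp: Gam_def)
  then show ?thesis using finite_subset by blast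
qed

lemma finite_Bdr: "finite (Bdr n i)"
  using finite_Gam finite_subset[of "Bdr n i" "Gam n i"] by (auto simp: Bdr_def)

lemma Gam_finite_el: "F \<in> Gam n i \<Longrightarrow> finite F"
  by (auto simp: Gam_def intro: finite_subset)

lemma card_two_out: "F \<subseteq> {0..n} - {j, k} \<Longrightarrow> j \<le> n \<Longrightarrow> k \<le> n \<Longrightarrow> j \<noteq> k \<Longrightarrow> card F < n"
proof -
  assume a: "F \<subseteq> {0..n} - {j, k}" "j \<le> n" "k \<le> n" "j \<noteq> k"
  have "card F \<le> card ({0..n} - {j, k})" using a(1) by (intro card_mono) auto
  also have "\<dots> = Suc n - 2" using a by (subst card_Diff_subset) auto
  finally show ?thesis using a by linarith
qed

lemma Bdr_card: "i < n \<Longrightarrow> F \<in> Bdr n i \<Longrightarrow> card F < n"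
proof -
  assume i: "i < n" and F: "F \<in> Bdr n i"
  then obtain j k where jk: "j \<le> i" "i < k" "k \<le> n" "j \<notin> F" "k \<notin> F" by (auto simp: Bdr_def)
  have "F \<subseteq> {0..n}" using F by (auto simp: Bdr_def Gam_def)
  then have "F \<subseteq> {0..n} - {j, k}" using jk by auto
  then show ?thesis using card_two_out jk i by force
qed

lemma Lam_less_Some: "Lam_less n i (Some F) (Some G) = (F \<subset> G)"
  by (simp add: Lam_less_def)
lemma Lam_less_None: "Lam_less n i (Some F) None = (\<exists>j k. j \<le> i \<and> i < k \<and> k \<le> n \<and> j \<notin> F \<and> k \<notin> F)"
  by (simp add: Lam_less_def)
lemma Lam_less_None2: "\<not> Lam_less n i None x"
  by (cases x) (simp_all add: Lam_less_def)

lemma Lam_elems_Gam: "Lam_elems n i = Some ` Gam n i \<union> {None}"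
  by (simp add: Lam_elems_def Gam_def)

lemma Bdr_Gam: "Bdr n i \<subseteq> Gam n i" by (auto simp: Bdr_def)

lemma Lam_chains:
  assumes i: "i < n"
  shows "{c. c \<subseteq> Lam_elems n i \<and> is_chain (Lam_less n i) c \<and> Lam_rank n ` c = T}
    = image Some ` chs (Gam n i) T \<union> (if n \<in> T then (\<lambda>c'. insert None (Some ` c')) ` chs (Bdr n i) (T - {n}) else {})"
    (is "?S = ?A \<union> ?B")
proof
  show "?S \<subseteq> ?A \<union> ?B"
  proof
    fix c assume "c \<in> ?S"
    then have cL: "c \<subseteq> Lam_elems n i" and ch: "is_chain (Lam_less n i) c" and rk: "Lam_rank n ` c = T" by auto
    define c' where "c' = {F. Some F \<in> c}"
    have c'G: "c' \<subseteq> Gam n i" using cL unfolding Lam_elems_Gam c'_def by blast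
    have ch': "is_chain (\<subset>) c'"
      unfolding is_chain_def
    proof (intro ballI impI)
      fix F G assume "F \<in> c'" "G \<in> c'" "F \<noteq> G"
      then have "Some F \<in> c" "Some G \<in> c" "Some F \<noteq> Some G" by (auto simp: c'_def)
      then have "Lam_less n i (Some F) (Some G) \<or> Lam_less n i (Some G) (Some F)"
        using ch unfolding is_chain_def by blast
      then show "F \<subset> G \<or> G \<subset> F" by (simp add: Lam_less_Some)
    qed
    show "c \<in> ?A \<union> ?B"
    proof (cases "None \<in> c")
      case False
      have cc: "c = Some ` c'"
      proof (rule set_eqI)
        fix x show "x \<in> c \<longleftrightarrow> x \<in> Some ` c'"
          using False by (cases x) (auto simp: c'_def)
      qed
      have "card ` c' = T" using rk cc by (auto simp: Lam_rank_def image_image)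
      then have "c' \<in> chs (Gam n i) T" using c'G ch' by (simp add: chs_def)
      then show ?thesis using cc by blast
    next
      case True
      have cc: "c = insert None (Some ` c')"
      proof (rule set_eqI)
        fix x show "x \<in> c \<longleftrightarrow> x \<in> insert None (Some ` c')"
          using True by (cases x) (auto simp: c'_def)
      qed
      have c'B: "c' \<subseteq> Bdr n i"
      proof
        fix F assume F: "F \<in> c'"
        then have "Some F \<in> c" by (simp add: c'_def)
        then have "Lam_less n i (Some F) None \<or> Lam_less n i None (Some F)"
          using ch True unfolding is_chain_def by blast
        then have "Lam_less n i (Some F) None" using Lam_less_None2 by blast
        then show "F \<in> Bdr n i" using F c'G by (auto simp: Bdr_def Lam_less_None)
      qed
      have nc: "n \<notin> card ` c'" using c'B Bdr_card[OF i] by fastforce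
      have "Lam_rank n ` c = insert n (card ` c')" using cc by (auto simp: Lam_rank_def image_image)
      then have nT: "n \<in> T" and "card ` c' = T - {n}" using rk nc by auto
      then have "c' \<in> chs (Bdr n i) (T - {n})" using c'B ch' by (simp add: chs_def)
      then show ?thesis using cc nT by auto
    qed
  qed
next
  show "?A \<union> ?B \<subseteq> ?S"
  proof
    fix c assume "c \<in> ?A \<union> ?B"
    then show "c \<in> ?S"
    proof
      assume "c \<in> ?A"
      then obtain c' where c': "c' \<in> chs (Gam n i) T" and cc: "c = Some ` c'" by blast
      have "c' \<subseteq> Gam n i" using c' by (simp add: chs_def)
      then have "c \<subseteq> Lam_elems n i" using cc unfolding Lam_elems_Gam by blast
      moreover have "is_chain (Lam_less n i) c" using c' cc by (auto simp: chs_def is_chain_def Lam_less_Some)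
      moreover have "Lam_rank n ` c = T" using c' cc by (auto simp: chs_def Lam_rank_def image_image)
      ultimately show ?thesis by simp
    next
      assume "c \<in> ?B"
      then obtain c' where nT: "n \<in> T" and c': "c' \<in> chs (Bdr n i) (T - {n})" and cc: "c = insert None (Some ` c')"
        by (auto split: if_splits)
      have c'B: "c' \<subseteq> Bdr n i" and ch': "is_chain (\<subset>) c'" and rk': "card ` c' = T - {n}"
        using c' by (auto simp: chs_def)
      have "c \<subseteq> Lam_elems n i" using c'B Bdr_Gam cc unfolding Lam_elems_Gam by blast
      moreover have "is_chain (Lam_less n i) c"
        unfolding is_chain_def
      proof (intro ballI impI)
        fix x y assume x: "x \<in> c" and y: "y \<in> c" and xy: "x \<noteq> y"
        show "Lam_less n i x y \<or> Lam_less n i y x"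
        proof (cases x)
          case None
          then obtain G where "y = Some G" "G \<in> c'" using y xy cc by auto
          then show ?thesis using None c'B by (auto simp: Lam_less_None Bdr_def)
        next
          case (Some F)
          then have F: "F \<in> c'" using x cc by auto
          show ?thesis
          proof (cases y)
            case None then show ?thesis using Some F c'B by (auto simp: Lam_less_None Bdr_def)
          next
            case (Some G)
            then have "G \<in> c'" using y cc by auto
            then show ?thesis using F ch' xy Some \<open>x = Some F\<close> by (auto simp: is_chain_def Lam_less_Some)
          qed
        qed
      qed
      moreover have "Lam_rank n ` c = T" using rk' nT cc by (auto simp: Lam_rank_def image_image)
      ultimately show ?thesis by simp
    qed
  qed
qed

lemma flag_f_Lam:
  assumes i: "i < n"
  shows "flag_f (Lam_elems n i) (Lam_less n i) (Lam_rank n) T =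
     int (card (chs (Gam n i) T)) + (if n \<in> T then int (card (chs (Bdr n i) (T - {n}))) else 0)"
proof -
  have fA: "finite (image Some ` chs (Gam n i) T)" using finite_chs_gen[OF finite_Gam] by simp
  have fB: "finite ((\<lambda>c'. insert None (Some ` c')) ` chs (Bdr n i) (T - {n}))"
    using finite_chs_gen[OF finite_Bdr] by simp
  have disj: "image Some ` chs (Gam n i) T \<inter> (\<lambda>c'. insert None (Some ` c')) ` chs (Bdr n i) (T - {n}) = {}"
    by auto
  have inj1: "inj_on (image Some) X" for X :: "nat set set set"
    by (rule inj_onI) (simp add: inj_image_eq_iff)
  have inj2: "inj_on (\<lambda>c'. insert None (Some ` c')) X" for X :: "nat set set set"
  proof (rule inj_onI)
    fix a b :: "nat set set" assume "insert None (Some ` a) = insert None (Some ` b)"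
    then have "Some ` a = Some ` b" by (metis image_iff insert_ident option.distinct(1))
    then show "a = b" by (simp add: inj_image_eq_iff)
  qed
  have "flag_f (Lam_elems n i) (Lam_less n i) (Lam_rank n) T =
     int (card (image Some ` chs (Gam n i) T \<union> (if n \<in> T then (\<lambda>c'. insert None (Some ` c')) ` chs (Bdr n i) (T - {n}) else {})))"
    unfolding flag_f_def Lam_chains[OF i] ..
  also have "\<dots> = int (card (chs (Gam n i) T)) + (if n \<in> T then int (card (chs (Bdr n i) (T - {n}))) else 0)"
    using fA fB disj by (simp add: card_Un_disjoint card_image[OF inj1] card_image[OF inj2])
  finally show ?thesis .
qed

lemma Gam_memE: "F \<in> Gam n i \<Longrightarrow> F \<noteq> {} \<and> (\<exists>j. j \<le> i \<and> F \<subseteq> {0..n} - {j})"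
  by (simp add: Gam_def)

lemma Gam0: "Gam n 0 = nes {1..n}"
  by (auto simp: Gam_def nes_def)

lemma Gam1: "Gam n (Suc 0) = nes {1..n} \<union> nes ({0..n} - {1})"
proof
  show "Gam n (Suc 0) \<subseteq> nes {1..n} \<union> nes ({0..n} - {1})"
  proof
    fix F assume F: "F \<in> Gam n (Suc 0)"
    then have ex: "F \<noteq> {} \<and> (\<exists>j. j \<le> 1 \<and> F \<subseteq> {0..n} - {j})" by (simp add: Gam_def)
    then obtain j where j: "F \<noteq> {}" "j \<le> 1" "F \<subseteq> {0..n} - {j}" by (elim conjE exE) simp
    have "j = 0 \<or> j = 1" using j(2) by linarith
    then show "F \<in> nes {1..n} \<union> nes ({0..n} - {1})"
    proof
      assume "j = 0"
      then have "F \<subseteq> {1..n}" using j(3) by auto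
      then show ?thesis using j(1) unfolding nes_def by blast
    next
      assume "j = 1"
      then show ?thesis using j(1,3) unfolding nes_def by blast
    qed
  qed
next
  show "nes {1..n} \<union> nes ({0..n} - {1}) \<subseteq> Gam n (Suc 0)"
  proof
    fix F assume "F \<in> nes {1..n} \<union> nes ({0..n} - {1})"
    then show "F \<in> Gam n (Suc 0)"
    proof
      assume "F \<in> nes {1..n}"
      then have a: "F \<noteq> {}" "F \<subseteq> {0..n} - {0}" unfolding nes_def by auto
      have "(0::nat) \<le> Suc 0" by simp
      with a show ?thesis unfolding Gam_def by blast
    next
      assume "F \<in> nes ({0..n} - {1})"
      then have a: "F \<noteq> {}" "F \<subseteq> {0..n} - {Suc 0}" unfolding nes_def by auto
      have "Suc 0 \<le> Suc 0" by simp
      with a show ?thesis unfolding Gam_def by blast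
    qed
  qed
qed

lemma chs_mono: "Fs \<subseteq> Gs \<Longrightarrow> chs Fs T \<subseteq> chs Gs T"
  by (auto simp: chs_def)

lemma chs_Bdr0: "n \<notin> T \<Longrightarrow> chs (Bdr n 0) T = chs (Gam n 0) T"
proof
  show "chs (Bdr n 0) T \<subseteq> chs (Gam n 0) T" by (rule chs_mono) (auto simp: Bdr_def)
next
  assume nT: "n \<notin> T"
  show "chs (Gam n 0) T \<subseteq> chs (Bdr n 0) T"
  proof
    fix c assume c: "c \<in> chs (Gam n 0) T"
    have "c \<subseteq> Bdr n 0"
    proof
      fix F assume F: "F \<in> c"
      then have FG: "F \<in> nes {1..n}" using c Gam0 by (auto simp: chs_def)
      have "card F \<in> T" using c F by (auto simp: chs_def)
      then have "F \<noteq> {1..n}" using nT by auto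
      moreover have "F \<subseteq> {1..n}" using FG by (simp add: nes_def)
      ultimately have "\<not> {1..n} \<subseteq> F" by blast
      then obtain k where k: "k \<in> {1..n}" "k \<notin> F" by blast
      have "0 \<notin> F" using FG by (auto simp: nes_def)
      then have "\<exists>j k. j \<le> 0 \<and> 0 < k \<and> k \<le> n \<and> j \<notin> F \<and> k \<notin> F"
        using k by (intro exI[of _ 0] exI[of _ k]) auto
      moreover have "F \<in> Gam n 0" using F c by (auto simp: chs_def)
      ultimately show "F \<in> Bdr n 0" by (simp add: Bdr_def)
    qed
    then show "c \<in> chs (Bdr n 0) T" using c by (auto simp: chs_def)
  qed
qed

lemma chain_top:
  assumes fin: "finite c" and ne: "c \<noteq> {}" and ch: "is_chain (\<subset>) c" and finF: "\<And>F. F \<in> c \<Longrightarrow> finite F"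
  shows "\<exists>M\<in>c. \<forall>F\<in>c. F \<subseteq> M"
proof -
  have "Max (card ` c) \<in> card ` c" using fin ne by (intro Max_in) auto
  then obtain M where M0: "M \<in> c" "card M = Max (card ` c)" by auto
  have "\<forall>F\<in>c. card F \<le> card M" using fin M0(2) by (auto intro: Max_ge)
  then have M: "M \<in> c" "\<forall>F\<in>c. card F \<le> card M" using M0 by auto
  have "\<forall>F\<in>c. F \<subseteq> M"
  proof
    fix F assume F: "F \<in> c"
    show "F \<subseteq> M"
    proof (cases "F = M")
      case False
      then have "F \<subset> M \<or> M \<subset> F" using ch F M(1) unfolding is_chain_def by blast
      moreover have "\<not> M \<subset> F" using psubset_card_mono[OF finF[OF F]] M(2) F by (meson not_le)
      ultimately show ?thesis by blast
    qed simp
  qed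
  then show ?thesis using M(1) by blast
qed

lemma chs_union:
  assumes A: "finite A" and B: "finite B"
  shows "chs (nes A \<union> nes B) T = chs (nes A) T \<union> chs (nes B) T"
proof
  show "chs (nes A \<union> nes B) T \<subseteq> chs (nes A) T \<union> chs (nes B) T"
  proof
    fix c assume c: "c \<in> chs (nes A \<union> nes B) T"
    then have cs: "c \<subseteq> nes A \<union> nes B" and ch: "is_chain (\<subset>) c" by (auto simp: chs_def)
    have finF: "finite F" if "F \<in> c" for F
    proof -
      have "F \<subseteq> A \<or> F \<subseteq> B" using cs that by (auto simp: nes_def)
      then show ?thesis using A B finite_subset by blast
    qed
    have "c \<subseteq> Pow (A \<union> B)" using cs by (auto simp: nes_def)
    then have fin: "finite c" using A B finite_subset by blast
    show "c \<in> chs (nes A) T \<union> chs (nes B) T"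
    proof (cases "c = {}")
      case True then show ?thesis using c by (auto simp: chs_def)
    next
      case False
      obtain M where M: "M \<in> c" "\<forall>F\<in>c. F \<subseteq> M" using chain_top[OF fin False ch finF] by blast
      have "M \<in> nes A \<or> M \<in> nes B" using M cs by auto
      then have "c \<subseteq> nes A \<or> c \<subseteq> nes B" using M cs by (auto simp: nes_def)
      then show ?thesis using c by (auto simp: chs_def)
    qed
  qed
next
  show "chs (nes A) T \<union> chs (nes B) T \<subseteq> chs (nes A \<union> nes B) T"
    using chs_mono[of "nes A" "nes A \<union> nes B" T] chs_mono[of "nes B" "nes A \<union> nes B" T] by blast
qed

lemma chs_inter: "chs (nes A) T \<inter> chs (nes B) T = chs (nes (A \<inter> B)) T"
  by (auto simp: chs_def nes_def)

lemma card_chs_union: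
  assumes A: "finite A" and B: "finite B"
  shows "int (card (chs (nes A \<union> nes B) T)) =
     int (card (chs (nes A) T)) + int (card (chs (nes B) T)) - int (card (chs (nes (A \<inter> B)) T))"
proof -
  have "card (chs (nes A) T \<union> chs (nes B) T) + card (chs (nes A) T \<inter> chs (nes B) T) =
      card (chs (nes A) T) + card (chs (nes B) T)"
    using finite_chs[OF A] finite_chs[OF B] by (rule card_Un_Int[symmetric])
  then show ?thesis using chs_union[OF A B, of T] chs_inter[of A T B] by simp
qed

lemma chs_Bdr1:
  assumes n: "2 \<le> n" and nT: "n \<notin> T"
  shows "card (chs (Gam n (Suc 0)) T) = card (chs (Bdr n (Suc 0)) T)
     + (if n - 1 \<in> T then card (chs (nes {2..n}) T) else 0)"
proof -
  let ?Z = "{2..n}"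
  have cZ: "card ?Z = n - 1" by simp
  have ZG: "nes ?Z \<subseteq> Gam n (Suc 0)" unfolding Gam1 by (auto simp: nes_def)
  have fG: "F \<in> Gam n (Suc 0) \<Longrightarrow> card F \<le> n" for F
  proof -
    assume "F \<in> Gam n (Suc 0)"
    then have "F \<noteq> {} \<and> (\<exists>j. j \<le> Suc 0 \<and> F \<subseteq> {0..n} - {j})" by (rule Gam_memE)
    then obtain j where "F \<subseteq> {0..n} - {j}" "j \<le> 1" by (elim conjE exE) simp
    then have "card F \<le> card ({0..n} - {j})" by (intro card_mono) auto
    also have "\<dots> = n" using \<open>j \<le> 1\<close> n by (subst card_Diff_subset) auto
    finally show ?thesis .
  qed
  have key: "F \<in> Bdr n (Suc 0) \<or> F = ?Z" if F: "F \<in> Gam n (Suc 0)" "card F \<noteq> n" for F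
  proof (rule ccontr)
    assume a: "\<not> (F \<in> Bdr n (Suc 0) \<or> F = ?Z)"
    obtain j where j: "F \<subseteq> {0..n} - {j}" "j \<le> 1" using Gam_memE[OF F(1)] by (elim conjE exE) simp
    have "\<not> (\<exists>k. 1 < k \<and> k \<le> n \<and> k \<notin> F)"
      using a F j unfolding Bdr_def by auto
    then have ZF: "?Z \<subseteq> F" by auto
    then obtain x where x: "x \<in> F" "x \<notin> ?Z" using a by blast
    have x1: "x \<le> 1" "x \<noteq> j" using x j by auto
    have "insert x ?Z \<subseteq> F" using ZF x by auto
    then have "card (insert x ?Z) \<le> card F" using j finite_subset by (intro card_mono) auto
    moreover have "card (insert x ?Z) = n" using x1 n by simp
    ultimately show False using fG[OF F(1)] F(2) by simp
  qed
  have split: "chs (Gam n (Suc 0)) T = chs (Bdr n (Suc 0)) T \<union> {c \<in> chs (Gam n (Suc 0)) T. ?Z \<in> c}"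
  proof
    show "chs (Gam n (Suc 0)) T \<subseteq> chs (Bdr n (Suc 0)) T \<union> {c \<in> chs (Gam n (Suc 0)) T. ?Z \<in> c}"
    proof
      fix c assume c: "c \<in> chs (Gam n (Suc 0)) T"
      show "c \<in> chs (Bdr n (Suc 0)) T \<union> {c \<in> chs (Gam n (Suc 0)) T. ?Z \<in> c}"
      proof (cases "?Z \<in> c")
        case True then show ?thesis using c by blast
      next
        case False
        have "c \<subseteq> Bdr n (Suc 0)"
        proof
          fix F assume F: "F \<in> c"
          have "card F \<in> T" using c F by (auto simp: chs_def)
          then have "card F \<noteq> n" using nT by auto
          moreover have "F \<in> Gam n (Suc 0)" using c F by (auto simp: chs_def)
          ultimately show "F \<in> Bdr n (Suc 0)" using key F False by blast
        qed
        then show ?thesis using c by (auto simp: chs_def)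
      qed
    qed
  next
    show "chs (Bdr n (Suc 0)) T \<union> {c \<in> chs (Gam n (Suc 0)) T. ?Z \<in> c} \<subseteq> chs (Gam n (Suc 0)) T"
      using chs_mono[OF Bdr_Gam] by blast
  qed
  have disj: "chs (Bdr n (Suc 0)) T \<inter> {c \<in> chs (Gam n (Suc 0)) T. ?Z \<in> c} = {}"
  proof -
    have "?Z \<notin> Bdr n (Suc 0)" by (auto simp: Bdr_def)
    then show ?thesis by (auto simp: chs_def)
  qed
  have Zset: "{c \<in> chs (Gam n (Suc 0)) T. ?Z \<in> c} = (if n - 1 \<in> T then chs (nes ?Z) T else {})"
  proof (cases "n - 1 \<in> T")
    case True
    have "{c \<in> chs (Gam n (Suc 0)) T. ?Z \<in> c} = chs (nes ?Z) T"
    proof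
      show "{c \<in> chs (Gam n (Suc 0)) T. ?Z \<in> c} \<subseteq> chs (nes ?Z) T"
      proof
        fix c assume c: "c \<in> {c \<in> chs (Gam n (Suc 0)) T. ?Z \<in> c}"
        then have cG: "c \<subseteq> Gam n (Suc 0)" and ch: "is_chain (\<subset>) c" and Zc: "?Z \<in> c" and cT: "card ` c = T"
          by (auto simp: chs_def)
        have "c \<subseteq> nes ?Z"
        proof
          fix F assume F: "F \<in> c"
          show "F \<in> nes ?Z"
          proof (cases "F = ?Z")
            case True then show ?thesis using n by (auto simp: nes_def)
          next
            case False
            then have "F \<subset> ?Z \<or> ?Z \<subset> F" using ch F Zc unfolding is_chain_def by blast
            moreover have "\<not> ?Z \<subset> F"
            proof
              assume "?Z \<subset> F"
              moreover have "finite F" using cG F Gam_finite_el by blast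
              ultimately have "card ?Z < card F" by (rule psubset_card_mono[rotated])
              moreover have "card F \<le> n" using fG cG F by blast
              moreover have "card F \<in> T" using cT F by blast
              ultimately have "card F = n" using cZ n by linarith
              then show False using \<open>card F \<in> T\<close> nT by simp
            qed
            moreover have "F \<noteq> {}" using cG F Gam_memE by blast
            ultimately show ?thesis by (auto simp: nes_def)
          qed
        qed
        then show "c \<in> chs (nes ?Z) T" using c by (auto simp: chs_def)
      qed
      show "chs (nes ?Z) T \<subseteq> {c \<in> chs (Gam n (Suc 0)) T. ?Z \<in> c}"
      proof
        fix c assume c: "c \<in> chs (nes ?Z) T"
        then obtain F where F: "F \<in> c" "card F = n - 1" using True by (auto simp: chs_def)
        have "F \<subseteq> ?Z" using c F by (auto simp: chs_def nes_def)
        then have "F = ?Z" using F(2) cZ by (intro card_subset_eq) auto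
        then show "c \<in> {c \<in> chs (Gam n (Suc 0)) T. ?Z \<in> c}" using c F chs_mono[OF ZG] by blast
      qed
    qed
    then show ?thesis using True by simp
  next
    case False
    have "{c \<in> chs (Gam n (Suc 0)) T. ?Z \<in> c} = {}"
    proof (rule ccontr)
      assume "{c \<in> chs (Gam n (Suc 0)) T. ?Z \<in> c} \<noteq> {}"
      then obtain c where c: "c \<in> chs (Gam n (Suc 0)) T" "?Z \<in> c" by blast
      have "card ?Z \<in> card ` c" using c(2) by (rule imageI)
      then have "card ?Z \<in> T" using c(1) by (simp add: chs_def)
      then show False using False cZ by simp
    qed
    then show ?thesis using False by simp
  qed
  have fin: "finite (chs (Gam n (Suc 0)) T)" by (rule finite_chs_gen[OF finite_Gam])
  have f1: "finite (chs (Bdr n (Suc 0)) T)" by (rule finite_chs_gen[OF finite_Bdr])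
  have f2: "finite {c \<in> chs (Gam n (Suc 0)) T. ?Z \<in> c}" using fin by simp
  have "card (chs (Gam n (Suc 0)) T) = card (chs (Bdr n (Suc 0)) T) + card {c \<in> chs (Gam n (Suc 0)) T. ?Z \<in> c}"
    using arg_cong[OF split, of card] card_Un_disjoint[OF f1 f2 disj] by simp
  then show ?thesis using Zset by (simp split: if_splits)
qed

definition Phi0 :: "nat \<Rightarrow> cd list \<Rightarrow> int" where
  "Phi0 n w = int (count_list (map (\<lambda>v. v @ [C]) (Lb (n - 1))) w)"

definition Phi1 :: "nat \<Rightarrow> cd list \<Rightarrow> int" where
  "Phi1 n w = 2 * Phi0 n w - int (count_list (map (\<lambda>v. v @ [C, C]) (Lb (n - 2))) w)
     + int (count_list (map (\<lambda>v. v @ [D]) (Lb (n - 2))) w)"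

lemma sum_count:
  assumes "finite A" "set L \<subseteq> A"
  shows "(\<Sum>w\<in>A. int (count_list L w) * f w) = (\<Sum>v\<leftarrow>L. f v)"
  using assms(2)
proof (induction L)
  case Nil then show ?case by simp
next
  case (Cons x L)
  have xA: "x \<in> A" using Cons by simp
  have "(\<Sum>w\<in>A. int (count_list (x # L) w) * f w) = (\<Sum>w\<in>A. (if x = w then f w else 0) + int (count_list L w) * f w)"
    by (rule sum.cong) (auto simp: algebra_simps)
  also have "\<dots> = f x + (\<Sum>w\<in>A. int (count_list L w) * f w)"
    using xA assms(1) by (simp add: sum.distrib)
  finally show ?case using Cons by simp
qed

lemma zsum_app:
  assumes "length s = k"
  shows "(\<Sum>v\<leftarrow>Lb k. zc (v @ u) (s @ r)) = int (kkr (Suc k) (rev s)) * zc u r"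
proof -
  have "(\<Sum>v\<leftarrow>Lb k. zc (v @ u) (s @ r)) = (\<Sum>v\<leftarrow>Lb k. zc v s * zc u r)"
  proof (rule arg_cong[where f = sum_list], rule map_cong[OF refl])
    fix v assume "v \<in> set (Lb k)"
    then have "length s = cd_deg v" using Lb_deg assms by simp
    then show "zc (v @ u) (s @ r) = zc v s * zc u r" by (rule zc_append)
  qed
  also have "\<dots> = zsum k s * zc u r" by (simp add: zsum_def sum_list_mult_const)
  also have "\<dots> = int (kkr (Suc k) (rev s)) * zc u r" using assms by (simp add: zsum_psi psi_def)
  finally show ?thesis .
qed

lemma kkr_top: "length r = N - 1 \<Longrightarrow> 1 \<le> N \<Longrightarrow> kkr N (a # r) = kkr N r"
  by (cases a) auto

lemma kkr_over: "length r = N \<Longrightarrow> kkr N (a # r) = (if a then 0 else kkr N r)"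
  by (cases a) auto

lemma card_nes_kkr: "card (chs (nes {1..n}) (b_positions t)) = kkr n (rev t)"
  using CH_kkr[of "{1..n}" t] by simp

lemma bpos_snoc_n: "length s + 1 = n \<Longrightarrow> b_positions (s @ [a]) - {n} = b_positions s"
  using bpos_sub[of s] by (auto simp: bpos_snoc)

lemma n_in_bpos: "length s + 1 = n \<Longrightarrow> (n \<in> b_positions (s @ [a])) = a"
  using bpos_sub[of s] by (auto simp: bpos_snoc)

lemma n_notin_bpos: "length s < n \<Longrightarrow> n \<notin> b_positions s"
  using bpos_sub[of s] by auto

lemma deg_sets:
  assumes "2 \<le> n"
  shows "set (map (\<lambda>v. v @ [C]) (Lb (n - 1))) \<subseteq> {w. cd_deg w = n}"
    "set (map (\<lambda>v. v @ [C, C]) (Lb (n - 2))) \<subseteq> {w. cd_deg w = n}"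
    "set (map (\<lambda>v. v @ [D]) (Lb (n - 2))) \<subseteq> {w. cd_deg w = n}"
  using assms by (auto simp: cd_deg_append dest: Lb_deg)

lemma f_Lam0:
  assumes n: "2 \<le> n" and t: "t = s @ [a]" and ls: "length s + 1 = n"
  shows "flag_f (Lam_elems n 0) (Lam_less n 0) (Lam_rank n) (b_positions t) = (if a then 2 else 1) * int (kkr n (rev s))"
proof -
  have "flag_f (Lam_elems n 0) (Lam_less n 0) (Lam_rank n) (b_positions t) =
     int (card (chs (Gam n 0) (b_positions t))) + (if n \<in> b_positions t then int (card (chs (Bdr n 0) (b_positions t - {n}))) else 0)"
    using n by (intro flag_f_Lam) simp
  also have "\<dots> = int (kkr n (a # rev s)) + (if a then int (kkr n (rev s)) else 0)"
    using t ls n_in_bpos[OF ls] bpos_snoc_n[OF ls] chs_Bdr0[OF n_notin_bpos[of s n]] card_nes_kkr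
    by (simp add: Gam0)
  also have "\<dots> = (if a then 2 else 1) * int (kkr n (rev s))"
    using kkr_top[of "rev s" n a] ls by simp
  finally show ?thesis .
qed

lemma is_cd0:
  assumes n: "2 \<le> n"
  shows "is_cd_index (Lam_elems n 0) (Lam_less n 0) (Lam_rank n) n (Phi0 n)"
  unfolding is_cd_index_def
proof (intro conjI allI impI)
  fix w :: "cd list" assume "cd_deg w \<noteq> n"
  then have "w \<notin> set (map (\<lambda>v. v @ [C]) (Lb (n - 1)))" using deg_sets(1)[OF n] by auto
  then show "Phi0 n w = 0" by (simp add: Phi0_def count_list_0_iff)
next
  fix u :: "bool list" assume lu: "length u = n"
  show "(\<Sum>w\<in>{w. cd_deg w = n}. Phi0 n w * cd_expand w u) = flag_h (Lam_elems n 0) (Lam_less n 0) (Lam_rank n) (b_positions u)"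
  proof (rule mob_main[OF _ lu])
    fix t :: "bool list" assume lt: "length t = n"
    have "t \<noteq> []" using lt n by auto
    then obtain s a where t: "t = s @ [a]" by (metis rev_exhaust)
    have ls: "length s + 1 = n" using t lt by simp
    have "(\<Sum>w\<in>{w. cd_deg w = n}. Phi0 n w * zc w t) = (\<Sum>v\<leftarrow>map (\<lambda>v. v @ [C]) (Lb (n - 1)). zc v t)"
      unfolding Phi0_def by (rule sum_count[OF finite_deg deg_sets(1)[OF n]])
    also have "\<dots> = (\<Sum>v\<leftarrow>Lb (n - 1). zc (v @ [C]) (s @ [a]))" by (simp add: t comp_def)
    also have "\<dots> = int (kkr n (rev s)) * zc [C] [a]" using zsum_app[of s "n - 1" "[C]" "[a]"] ls by simp
    also have "\<dots> = flag_f (Lam_elems n 0) (Lam_less n 0) (Lam_rank n) (b_positions t)"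
      using f_Lam0[OF n t ls] by simp
    finally show "(\<Sum>w\<in>{w. cd_deg w = n}. Phi0 n w * zc w t) = flag_f (Lam_elems n 0) (Lam_less n 0) (Lam_rank n) (b_positions t)" .
  qed
qed

lemma card_A2: "card ({0..n} - {1::nat}) = n" if "1 \<le> n" using that by (subst card_Diff_subset) auto

lemma int_card_Gam1:
  "int (card (chs (Gam n (Suc 0)) (b_positions t))) =
     2 * int (kkr n (rev t)) - int (kkr (n - 1) (rev t))" if n: "2 \<le> n"
proof -
  have i: "{1..n} \<inter> ({0..n} - {1}) = {2..n}" by auto
  have "int (card (chs (Gam n (Suc 0)) (b_positions t))) =
     int (card (chs (nes {1..n}) (b_positions t))) + int (card (chs (nes ({0..n} - {1})) (b_positions t)))
     - int (card (chs (nes {2..n}) (b_positions t)))"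
    unfolding Gam1 using card_chs_union[of "{1..n}" "{0..n} - {1}"] i by simp
  also have "\<dots> = 2 * int (kkr n (rev t)) - int (kkr (n - 1) (rev t))"
    using CH_kkr[of "{1..n}" t] CH_kkr[of "{0..n} - {1}" t] CH_kkr[of "{2..n}" t] card_A2[of n] n by simp
  finally show ?thesis .
qed

lemma f_Lam1:
  assumes n: "2 \<le> n" and t: "t = s' @ [b, a]" and ls: "length s' + 2 = n"
  shows "flag_f (Lam_elems n (Suc 0)) (Lam_less n (Suc 0)) (Lam_rank n) (b_positions t) =
     (2 * int (kkr n (b # rev s')) - (if a then 0 else int (kkr (n - 1) (rev s'))))
     + (if a then 2 * int (kkr n (b # rev s')) - int (kkr (n - 1) (rev s'))
           - (if b then int (kkr (n - 1) (rev s')) else 0) else 0)"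
proof -
  define s where "s = s' @ [b]"
  have t2: "t = s @ [a]" using t s_def by simp
  have ls2: "length s + 1 = n" using ls s_def by simp
  have nn: "n \<notin> b_positions s" using n_notin_bpos[of s n] ls2 by simp
  have rs: "rev s = b # rev s'" by (simp add: s_def)
  have k1: "kkr n (a # b # rev s') = kkr n (b # rev s')" using kkr_top[of "b # rev s'" n a] ls by simp
  have k2: "kkr (n - 1) (a # b # rev s') = (if a then 0 else kkr (n - 1) (b # rev s'))"
    using kkr_over[of "b # rev s'" "n - 1" a] ls by simp
  have k3: "kkr (n - 1) (b # rev s') = kkr (n - 1) (rev s')"
    using kkr_top[of "rev s'" "n - 1" b] ls by simp
  have b1: "(n - 1 \<in> b_positions s) = b" using n_in_bpos[of s' "n - 1" b] ls by (simp add: s_def)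
  have "flag_f (Lam_elems n (Suc 0)) (Lam_less n (Suc 0)) (Lam_rank n) (b_positions t) =
     int (card (chs (Gam n (Suc 0)) (b_positions t))) + (if n \<in> b_positions t then int (card (chs (Bdr n (Suc 0)) (b_positions t - {n}))) else 0)"
    using n by (intro flag_f_Lam) simp
  also have "\<dots> = int (card (chs (Gam n (Suc 0)) (b_positions t))) + (if a then int (card (chs (Bdr n (Suc 0)) (b_positions s))) else 0)"
    using n_in_bpos[OF ls2] bpos_snoc_n[OF ls2] t2 by simp
  also have "int (card (chs (Bdr n (Suc 0)) (b_positions s))) = int (card (chs (Gam n (Suc 0)) (b_positions s)))
      - (if b then int (card (chs (nes {2..n}) (b_positions s))) else 0)"
    using chs_Bdr1[OF n nn] b1 by simp
  also have "int (card (chs (nes {2..n}) (b_positions s))) = int (kkr (n - 1) (rev s'))"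
    using CH_kkr[of "{2..n}" s] rs k3 by simp
  finally show ?thesis using int_card_Gam1[OF n, of t] int_card_Gam1[OF n, of s] t2 rs k1 k2 k3 by simp
qed

lemma is_cd1:
  assumes n: "2 \<le> n"
  shows "is_cd_index (Lam_elems n (Suc 0)) (Lam_less n (Suc 0)) (Lam_rank n) n (Phi1 n)"
  unfolding is_cd_index_def
proof (intro conjI allI impI)
  fix w :: "cd list" assume "cd_deg w \<noteq> n"
  then have "w \<notin> set (map (\<lambda>v. v @ [C]) (Lb (n - 1)))" "w \<notin> set (map (\<lambda>v. v @ [C, C]) (Lb (n - 2)))"
     "w \<notin> set (map (\<lambda>v. v @ [D]) (Lb (n - 2)))" using deg_sets[OF n] by auto
  then show "Phi1 n w = 0" by (simp add: Phi1_def Phi0_def count_list_0_iff)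
next
  fix u :: "bool list" assume lu: "length u = n"
  show "(\<Sum>w\<in>{w. cd_deg w = n}. Phi1 n w * cd_expand w u) = flag_h (Lam_elems n (Suc 0)) (Lam_less n (Suc 0)) (Lam_rank n) (b_positions u)"
  proof (rule mob_main[OF _ lu])
    fix t :: "bool list" assume lt: "length t = n"
    have "t \<noteq> []" using lt n by auto
    then obtain s a where ta: "t = s @ [a]" by (metis rev_exhaust)
    have "s \<noteq> []" using ta lt n by auto
    then obtain s' b where sb: "s = s' @ [b]" by (metis rev_exhaust)
    have t: "t = s' @ [b, a]" using ta sb by simp
    have ls: "length s' + 2 = n" using t lt by simp
    let ?L0 = "map (\<lambda>v. v @ [C]) (Lb (n - 1))"
    let ?L1 = "map (\<lambda>v. v @ [C, C]) (Lb (n - 2))"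
    let ?L2 = "map (\<lambda>v. v @ [D]) (Lb (n - 2))"
    have "(\<Sum>w\<in>{w. cd_deg w = n}. Phi1 n w * zc w t) =
       2 * (\<Sum>w\<in>{w. cd_deg w = n}. int (count_list ?L0 w) * zc w t)
       - (\<Sum>w\<in>{w. cd_deg w = n}. int (count_list ?L1 w) * zc w t)
       + (\<Sum>w\<in>{w. cd_deg w = n}. int (count_list ?L2 w) * zc w t)"
      by (simp add: Phi1_def Phi0_def algebra_simps sum.distrib sum_subtractf sum_distrib_left)
    also have "\<dots> = 2 * (\<Sum>v\<leftarrow>?L0. zc v t) - (\<Sum>v\<leftarrow>?L1. zc v t) + (\<Sum>v\<leftarrow>?L2. zc v t)"
      using sum_count[OF finite_deg deg_sets(1)[OF n]] sum_count[OF finite_deg deg_sets(2)[OF n]]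
        sum_count[OF finite_deg deg_sets(3)[OF n]] by simp
    also have "(\<Sum>v\<leftarrow>?L0. zc v t) = int (kkr n (b # rev s')) * zc [C] [a]"
      using zsum_app[of "s' @ [b]" "n - 1" "[C]" "[a]"] ls t by (simp add: comp_def)
    also have "(\<Sum>v\<leftarrow>?L1. zc v t) = int (kkr (n - 1) (rev s')) * zc [C, C] [b, a]"
      using zsum_app[of s' "n - 2" "[C, C]" "[b, a]"] ls t by (simp add: comp_def Suc_diff_Suc numeral_2_eq_2)
    also have "(\<Sum>v\<leftarrow>?L2. zc v t) = int (kkr (n - 1) (rev s')) * zc [D] [b, a]"
      using zsum_app[of s' "n - 2" "[D]" "[b, a]"] ls t by (simp add: comp_def Suc_diff_Suc numeral_2_eq_2)
    finally have z: "(\<Sum>w\<in>{w. cd_deg w = n}. Phi1 n w * zc w t) =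
       2 * (int (kkr n (b # rev s')) * zc [C] [a]) - int (kkr (n - 1) (rev s')) * zc [C, C] [b, a]
       + int (kkr (n - 1) (rev s')) * zc [D] [b, a]" .
    show "(\<Sum>w\<in>{w. cd_deg w = n}. Phi1 n w * zc w t) = flag_f (Lam_elems n (Suc 0)) (Lam_less n (Suc 0)) (Lam_rank n) (b_positions t)"
      unfolding z f_Lam1[OF n t ls] by (cases a; cases b) (simp_all add: algebra_simps)
  qed
qed

lemma partA:
  assumes n: "5 \<le> n" and dw: "cd_deg w = n - 2"
  shows "2 ^ count_list w D \<le> card {xs. distinct xs \<and> set xs = {1..n} \<and> is_andre xs
                          \<and> cd_type xs = w @ [D] \<and> perm_at xs n = n - 1}"
    (is "_ \<le> card ?S")
proof -
  have wD: "w \<noteq> [D]" using dw n by auto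
  let ?f = "\<lambda>\<sigma>. \<sigma> @ [n, n - 1]"
  have finS: "finite ?S"
  proof (rule finite_subset)
    show "?S \<subseteq> {xs. set xs \<subseteq> {1..n} \<and> length xs = n}"
      using distinct_card by fastforce
    show "finite {xs. set xs \<subseteq> {1..n} \<and> length xs = n}" by (rule finite_lists_length_eq) simp
  qed
  have sub: "?f ` Pw w \<subseteq> ?S"
  proof
    fix x assume "x \<in> ?f ` Pw w"
    then obtain \<sigma> where s: "\<sigma> \<in> Pw w" and x: "x = \<sigma> @ [n, n - 1]" by blast
    have ls: "length \<sigma> = n - 2" using Pw_len[OF s] dw by simp
    have s1: "distinct \<sigma>" "set \<sigma> = {1..n - 2}" "andre0 (\<sigma> @ [n - 1])" "cd_type \<sigma> = w"
      using s ls n by (auto simp: Pw_def Suc_diff_Suc numeral_2_eq_2)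
    have "distinct x" using s1 x n by auto
    moreover have "set x = {1..n}" using s1 x n by auto
    moreover have "is_andre x"
    proof -
      have "andre0 [n, n - 1]" using n by (intro andre0_short) auto
      moreover have "\<forall>a\<in>set \<sigma>. a < n - 1" using s1 n by auto
      moreover have "\<forall>a\<in>set \<sigma>. \<forall>b\<in>set [n, n - 1]. a < b" using s1 n by auto
      ultimately show ?thesis unfolding is_andre_iff x by (intro andre0_concat[OF s1(3)])
    qed
    moreover have "cd_type x = w @ [D]"
    proof -
      have ne: "\<sigma> \<noteq> []" using ls n by auto
      then have "last \<sigma> \<in> set \<sigma>" by simp
      then have "last \<sigma> < hd [n, n - 1]" using s1 n by auto
      then have "cd_type x = cd_type \<sigma> @ cd_type [n, n - 1]" unfolding x by (intro cd_type_app) simp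
      moreover have "cd_type [n, n - 1] = [D]" using n by (simp add: cd_type_def)
      ultimately show ?thesis using s1 by simp
    qed
    moreover have "perm_at x n = n - 1"
    proof -
      have nl: "\<not> n - 1 < length \<sigma>" using ls n by linarith
      have e1: "n - 1 - length \<sigma> = 1" using ls n by linarith
      have "x ! (n - 1) = [n, n - 1] ! (n - 1 - length \<sigma>)" unfolding x nth_append by (simp only: nl if_False)
      also have "\<dots> = n - 1" unfolding e1 by simp
      finally show ?thesis by (simp add: perm_at_def)
    qed
    ultimately show "x \<in> ?S" by simp
  qed
  have inj: "inj_on ?f (Pw w)" by (rule inj_onI) simp
  have "2 ^ count_list w D \<le> card (Pw w)" by (rule Pw_bound[OF wD])
  also have "\<dots> = card (?f ` Pw w)" by (rule card_image[OF inj, symmetric])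
  also have "\<dots> \<le> card ?S" by (rule card_mono[OF finS sub])
  finally show ?thesis .
qed

lemma partB:
  assumes n: "5 \<le> n" and dw: "cd_deg w = n - 2"
  shows "2 ^ count_list w D \<le> Phi_check n 1 (w @ [D])"
proof -
  have n2: "2 \<le> n" using n by simp
  have p0: "Phi_Lam n 0 = Phi0 n" unfolding Phi_Lam_def by (rule cd_index_eq[OF is_cd0[OF n2]])
  have p1: "Phi_Lam n 1 = Phi1 n" unfolding Phi_Lam_def One_nat_def by (rule cd_index_eq[OF is_cd1[OF n2]])
  have z0: "Phi0 n (w @ [D]) = 0" by (auto simp: Phi0_def count_list_0_iff)
  have z1: "count_list (map (\<lambda>v. v @ [C, C]) (Lb (n - 2))) (w @ [D]) = 0"
    by (auto simp: count_list_0_iff)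
  have z2: "count_list (map (\<lambda>v. v @ [D]) (Lb (n - 2))) (w @ [D]) = count_list (Lb (n - 2)) w"
    by (rule count_map_snoc)
  have "Phi_check n 1 (w @ [D]) = int (count_list (Lb (n - 2)) w)"
    using p0 p1 z0 z1 z2 by (simp add: Phi_check_def Phi1_def)
  moreover have "2 ^ count_list w D \<le> count_list (Lb (n - 2)) w"
    using Lb_bound[of "n - 2" w] n dw by simp
  ultimately show ?thesis by simp
qed

theorem proposition4p6:
  fixes n m :: nat and w :: "cd list"
  assumes "n \<ge> 5" and "cd_deg w = n - 2" and "count_list w D = m"
  shows "2 ^ m \<le> card {xs. distinct xs \<and> set xs = {1..n} \<and> is_andre xs
                          \<and> cd_type xs = w @ [D] \<and> perm_at xs n = n - 1}
       \<and> 2 ^ m \<le> Phi_check n 1 (w @ [D])"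
  using partA[OF assms(1,2)] partB[OF assms(1,2)] assms(3) by simp

end
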